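(* For all real $z\geq 10^9$, \[ \Biggl| S_1(z) - \log z - \gamma - \sum_p \frac{\log p}{p(p-1)} \Biggr| \leq \frac{58}{\sqrt{z}}, \qquad\text{where } S_1(z)=\sum_{n\le z}\frac{\mu(n)^2}{\varphi(n)}, \] the sum over $p$ runs over all primes, and $\gamma=0.5772156\ldots$ is the Euler–Mascheroni constant.
   Context: $\mu$ is the Möbius function and $\varphi$ Euler's totient function. *)

theory Defs
  imports "HOL-Analysis.Analysis" "HOL-Number_Theory.Number_Theory"
    "HOL-Computational_Algebra.Squarefree"
begin

definition moebius_mu :: "nat \<Rightarrow> real" where
  "moebius_mu n = (if n = 0 \<or> \<not> squarefree n then 0 else (-1) ^ card (prime_factors n))"

definition S1 :: "real \<Rightarrow> real" where
  "S1 z = (\<Sum>n\<in>{1..nat \<lfloor>z\<rfloor>}. (moebius_mu n)^2 / real (totient n))"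

end

theory Submission
  imports Defs
begin

definition multf :: "(nat \<Rightarrow> real) \<Rightarrow> bool" where
  "multf f \<longleftrightarrow> f 1 = 1 \<and> (\<forall>m n. coprime m n \<longrightarrow> f (m*n) = f m * f n)"

lemma multfD: "multf f \<Longrightarrow> coprime m n \<Longrightarrow> f (m*n) = f m * f n"
  by (simp add: multf_def)

lemma multf_1: "multf f \<Longrightarrow> f 1 = 1"
  by (simp add: multf_def)

lemma multf_mult: "multf f \<Longrightarrow> multf g \<Longrightarrow> multf (\<lambda>n. f n * g n)"
  by (simp add: multf_def)

lemma multf_inverse: "multf f \<Longrightarrow> multf (\<lambda>n. inverse (f n))"
  by (simp add: multf_def)

lemma multf_divide: "multf f \<Longrightarrow> multf g \<Longrightarrow> multf (\<lambda>n. f n / g n)"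
  by (simp add: multf_def)

lemma multf_real: "multf (\<lambda>n. real n)"
  by (simp add: multf_def)

lemma multf_totient: "multf (\<lambda>n. real (totient n))"
  by (simp add: multf_def totient_mult_coprime)

lemma multf_sqrt: "multf (\<lambda>n. sqrt (real n))"
  by (simp add: multf_def real_sqrt_mult)

definition sqf :: "nat \<Rightarrow> real" where "sqf n = (if squarefree n then 1 else 0)"

lemma multf_sqf: "multf sqf"
  unfolding multf_def sqf_def
  by (auto dest: squarefree_multD intro: squarefree_mult_coprime)

lemma gcd_split_aux2: "coprime (m::nat) n \<Longrightarrow> a dvd m \<Longrightarrow> b dvd n \<Longrightarrow> gcd (a*b) m = a"
proof -
  assume H: "coprime m n" "a dvd m" "b dvd n"
  have "coprime m b" using H coprime_imp_coprime dvd_trans by (meson dvd_refl)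
  hence "gcd (a*b) m = gcd a m" by (rule gcd_mult_left_right_cancel)
  also have "\<dots> = a" using H(2) by (simp add: gcd_nat.absorb1)
  finally show ?thesis .
qed

lemma gcd_split_aux: "coprime (m::nat) n \<Longrightarrow> d dvd m * n \<Longrightarrow> gcd d m * gcd d n = d"
proof -
  assume H: "coprime m n" "d dvd m * n"
  obtain a b where ab: "d = a*b" "a dvd m" "b dvd n" using division_decomp[OF H(2)] by blast
  have "gcd (a*b) m = a" using gcd_split_aux2 H ab by blast
  moreover have "gcd (b*a) n = b" using gcd_split_aux2[of n m b a] H ab by (simp add: coprime_commute)
  ultimately show ?thesis using ab by (simp add: mult.commute)
qed

lemma divisor_prod_sum:
  fixes F :: "nat \<Rightarrow> real"
  assumes "coprime m n" "m > 0" "n > 0"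
  shows "(\<Sum>d\<in>{d. d dvd m*n}. F d) = (\<Sum>d1\<in>{d. d dvd m}. \<Sum>d2\<in>{d. d dvd n}. F (d1*d2))"
proof -
  have fin: "finite {d. d dvd m}" "finite {d. d dvd n}" using assms by auto
  have "(\<Sum>d1\<in>{d. d dvd m}. \<Sum>d2\<in>{d. d dvd n}. F (d1*d2)) =
        (\<Sum>p\<in>{d. d dvd m} \<times> {d. d dvd n}. F (fst p * snd p))"
    by (simp add: sum.cartesian_product case_prod_beta)
  also have "\<dots> = (\<Sum>d\<in>{d. d dvd m*n}. F d)"
  proof (rule sum.reindex_bij_witness[of _ "\<lambda>d. (gcd d m, gcd d n)" "\<lambda>p. fst p * snd p"])
    fix d assume d: "d \<in> {d. d dvd m*n}"
    show "fst (gcd d m, gcd d n) * snd (gcd d m, gcd d n) = d"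
      using d assms gcd_split_aux by simp
    show "(gcd d m, gcd d n) \<in> {d. d dvd m} \<times> {d. d dvd n}" by auto
  next
    fix p assume p: "p \<in> {d. d dvd m} \<times> {d. d dvd n}"
    then obtain a b where ab: "p = (a,b)" "a dvd m" "b dvd n" by auto
    have "gcd (a*b) m = a" using gcd_split_aux2 assms ab by blast
    moreover have "gcd (b*a) n = b" using gcd_split_aux2[of n m b a] assms ab by (simp add: coprime_commute)
    ultimately show "(gcd (fst p * snd p) m, gcd (fst p * snd p) n) = p"
      using ab by (simp add: mult.commute)
    show "fst p * snd p \<in> {d. d dvd m * n}" using ab by (auto intro: mult_dvd_mono)
  qed simp
  finally show ?thesis by simp
qed

lemma multf_divsum:
  assumes "multf f"
  shows "multf (\<lambda>n. \<Sum>d\<in>{d. d dvd n}. f d)"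
  unfolding multf_def
proof (intro conjI allI impI)
  show "(\<Sum>d\<in>{d. d dvd (1::nat)}. f d) = 1" using assms by (simp add: multf_def)
  fix m n :: nat assume cop: "coprime m n"
  show "(\<Sum>d\<in>{d. d dvd m*n}. f d) = (\<Sum>d\<in>{d. d dvd m}. f d) * (\<Sum>d\<in>{d. d dvd n}. f d)"
  proof (cases "m = 0 \<or> n = 0")
    case True
    then show ?thesis using cop by auto
  next
    case False
    hence mn: "m > 0" "n > 0" by auto
    have "(\<Sum>d\<in>{d. d dvd m*n}. f d) = (\<Sum>d1\<in>{d. d dvd m}. \<Sum>d2\<in>{d. d dvd n}. f (d1*d2))"
      by (rule divisor_prod_sum[OF cop mn])
    also have "\<dots> = (\<Sum>d1\<in>{d. d dvd m}. \<Sum>d2\<in>{d. d dvd n}. f d1 * f d2)"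
    proof (intro sum.cong refl)
      fix d1 d2 assume "d1 \<in> {d. d dvd m}" "d2 \<in> {d. d dvd n}"
      hence "coprime d1 d2" using cop by (auto intro: coprime_imp_coprime dvd_trans)
      thus "f (d1*d2) = f d1 * f d2" using assms by (simp add: multf_def)
    qed
    also have "\<dots> = (\<Sum>d\<in>{d. d dvd m}. f d) * (\<Sum>d\<in>{d. d dvd n}. f d)"
      by (simp add: sum_product)
    finally show ?thesis .
  qed
qed

lemma pp_induct:
  assumes base: "P 1"
    and step: "\<And>p k m. prime p \<Longrightarrow> k > 0 \<Longrightarrow> \<not> p dvd m \<Longrightarrow> m > 0 \<Longrightarrow> P m \<Longrightarrow> P (p^k * m)"
    and n: "n > 0"
  shows "P (n::nat)"
  using n
proof (induction n rule: less_induct)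
  case (less n)
  show ?case
  proof (cases "n = 1")
    case True thus ?thesis using base by simp
  next
    case False
    then obtain p where p: "prime p" "p dvd n" using prime_factor_nat by blast
    obtain y where y: "n = p ^ multiplicity p n * y" "\<not> p dvd y"
      by (rule multiplicity_decompose'[of n p]) (use p less.prems in auto)
    have k: "multiplicity p n > 0"
      using p less.prems by (simp add: prime_multiplicity_gt_zero_iff)
    have ypos: "y > 0" using y less.prems by (cases "y = 0") auto
    have "p ^ multiplicity p n > 1" using k p by (metis one_less_power prime_gt_1_nat)
    hence "1 * y < p ^ multiplicity p n * y" using ypos by (intro mult_strict_right_mono) auto
    hence "y < n" using y by simp
    hence "P y" using less.IH ypos by blast
    thus ?thesis using step[OF p(1) k y(2) ypos] y(1) by simp
  qed
qed

lemma coprime_pp: "prime p \<Longrightarrow> \<not> p dvd m \<Longrightarrow> coprime (p^k) (m::nat)"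
  by (simp add: prime_imp_coprime coprime_power_left_iff)

lemma multf_eq:
  assumes "multf f" "multf g" "\<And>p k. prime p \<Longrightarrow> k > 0 \<Longrightarrow> f (p^k) = g (p^k)" "n > 0"
  shows "f n = g n"
proof (rule pp_induct[OF _ _ assms(4)])
  show "f 1 = g 1" using assms by (simp add: multf_def)
next
  fix p k m :: nat assume H: "prime p" "0 < k" "\<not> p dvd m" "0 < m" "f m = g m"
  have c: "coprime (p^k) m" using H coprime_pp by blast
  thus "f (p^k*m) = g (p^k*m)" using H assms multfD[OF assms(1) c] multfD[OF assms(2) c] by simp
qed

lemma divsum_pp:
  assumes "prime (p::nat)"
  shows "(\<Sum>d\<in>{d. d dvd p^k}. f d) = (\<Sum>j\<le>k. f (p^j))"
proof -
  have "{d. d dvd p^k} = (\<lambda>j. p^j) ` {..k}"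
    using divides_primepow_nat[OF assms] by auto
  moreover have "inj_on (\<lambda>j. p^j) {..k}"
    using assms by (auto simp: inj_on_def) (metis prime_gt_1_nat power_inject_exp)
  ultimately show ?thesis by (simp add: sum.reindex)
qed

definition hc :: "nat \<Rightarrow> nat \<Rightarrow> real" where
  "hc p k = (if k = 1 then 1 / (real p * (real p - 1)) else if k = 2 then - 1 / (real p * (real p - 1)) else 0)"

definition hh :: "nat \<Rightarrow> real" where
  "hh d = (\<Prod>p\<in>prime_factors d. hc p (multiplicity p d))"

lemma multf_pf:
  "multf (\<lambda>d. \<Prod>p\<in>prime_factors d. c p (multiplicity p d))"
  unfolding multf_def
proof (intro conjI allI impI)
  show "(\<Prod>p\<in>prime_factors (1::nat). c p (multiplicity p 1)) = 1" by simp
  fix m n :: nat assume cop: "coprime m n"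
  show "(\<Prod>p\<in>prime_factors (m*n). c p (multiplicity p (m*n))) =
        (\<Prod>p\<in>prime_factors m. c p (multiplicity p m)) * (\<Prod>p\<in>prime_factors n. c p (multiplicity p n))"
  proof (cases "m = 0 \<or> n = 0")
    case True
    then show ?thesis using cop by auto
  next
    case False
    hence mn: "m \<noteq> 0" "n \<noteq> 0" by auto
    have disj: "prime_factors m \<inter> prime_factors n = {}"
      using cop mn by (auto simp: in_prime_factors_iff coprime_common_divisor_nat)
        (metis coprime_common_divisor_nat prime_gt_1_nat nat_neq_iff)
    have A: "(\<Prod>p\<in>prime_factors m. c p (multiplicity p (m*n))) = (\<Prod>p\<in>prime_factors m. c p (multiplicity p m))"
    proof (intro prod.cong refl)
      fix p assume p: "p \<in> prime_factors m"
      hence "\<not> p dvd n" using disj mn by (auto simp: in_prime_factors_iff)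
      hence "multiplicity p n = 0" by (simp add: not_dvd_imp_multiplicity_0)
      thus "c p (multiplicity p (m*n)) = c p (multiplicity p m)"
        using p mn by (simp add: prime_elem_multiplicity_mult_distrib in_prime_factors_iff)
    qed
    have B: "(\<Prod>p\<in>prime_factors n. c p (multiplicity p (m*n))) = (\<Prod>p\<in>prime_factors n. c p (multiplicity p n))"
    proof (intro prod.cong refl)
      fix p assume p: "p \<in> prime_factors n"
      hence "\<not> p dvd m" using disj mn by (auto simp: in_prime_factors_iff)
      hence "multiplicity p m = 0" by (simp add: not_dvd_imp_multiplicity_0)
      thus "c p (multiplicity p (m*n)) = c p (multiplicity p n)"
        using p mn by (simp add: prime_elem_multiplicity_mult_distrib in_prime_factors_iff)
    qed
    show ?thesis
      using mn disj A B by (simp add: prime_factors_product prod.union_disjoint)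
  qed
qed

lemma multf_hh: "multf hh"
  unfolding hh_def by (rule multf_pf)

lemma pf_pp: "prime p \<Longrightarrow> (\<Prod>q\<in>prime_factors (p^k). c q (multiplicity q (p^k))) = (if k = 0 then 1 else c p k)"
  by (cases "k = 0") (auto simp: prime_factors_power prime_prime_factors)

lemma hh_pp: "prime p \<Longrightarrow> k > 0 \<Longrightarrow> hh (p^k) = hc p k"
  unfolding hh_def using pf_pp[of p hc k] by simp

lemma hh_1: "hh 1 = 1" by (simp add: hh_def)

lemma sum_trunc:
  fixes k r :: nat
  assumes "\<And>j. r < j \<Longrightarrow> j \<le> k \<Longrightarrow> F j = (0::real)" "r \<le> k"
  shows "(\<Sum>j\<le>k. F j) = (\<Sum>j\<le>r. F j)"
proof (rule sum.mono_neutral_right)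
  show "finite {..k}" by simp
  show "{..r} \<subseteq> {..k}" using assms by auto
  show "\<forall>i\<in>{..k} - {..r}. F i = 0" using assms by auto
qed

lemma sum3: "(\<Sum>j\<le>(2::nat). F j) = F 0 + F 1 + (F 2::real)"
  by (simp add: numeral_2_eq_2)

lemma sum2: "(\<Sum>j\<le>(1::nat). F j) = F 0 + (F 1::real)"
  by simp

lemma hh_1': "hh 1 = 1" using multf_1[OF multf_hh] .
lemma hh_Suc0: "hh (Suc 0) = 1" using multf_1[OF multf_hh] by (simp add: One_nat_def)
lemma sqf_prime: "prime p \<Longrightarrow> sqf p = 1" by (simp add: sqf_def squarefree_prime)


lemma sqf_pp: "prime p \<Longrightarrow> sqf (p^k) = (if k \<le> 1 then 1 else 0)"
  by (auto simp: sqf_def squarefree_power_iff squarefree_prime prime_gt_1_nat)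

lemma totient_pp_real: "prime p \<Longrightarrow> k > 0 \<Longrightarrow> real (totient (p^k)) = real p ^ (k - 1) * (real p - 1)"
  using prime_gt_1_nat[of p] by (simp add: totient_prime_power of_nat_diff)

lemma hh_prime: "prime p \<Longrightarrow> hh p = hc p 1"
  using hh_pp[of p 1] by simp

lemma hh_prime': "prime p \<Longrightarrow> hh p = hc p (Suc 0)"
  using hh_pp[of p 1] by simp

lemma hc_facts:
  assumes "prime p"
  shows "hc p 1 + hc p 2 = 0" "real p * hc p 1 = 1 / (real p - 1)"
    "1 + real p * hc p 1 + real p ^ 2 * hc p 2 = 0"
proof -
  have p2: "real p \<ge> 2" using prime_ge_2_nat[OF assms] by simp
  show "hc p 1 + hc p 2 = 0" by (simp add: hc_def)
  show "real p * hc p 1 = 1 / (real p - 1)" using p2 by (simp add: hc_def)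
  have A: "real p ^ 2 * hc p 2 = - real p / (real p - 1)" using p2 by (simp add: hc_def power2_eq_square)
  have B: "real p * hc p 1 = 1 / (real p - 1)" using p2 by (simp add: hc_def)
  have "1 + real p * hc p 1 + real p ^ 2 * hc p 2 = 1 + 1 / (real p - 1) - real p / (real p - 1)"
    using A B by simp
  also have "\<dots> = 0" using p2 by (simp add: field_simps)
  finally show "1 + real p * hc p 1 + real p ^ 2 * hc p 2 = 0" .
qed

lemma C1:
  assumes "n > 0"
  shows "(\<Sum>d\<in>{d. d dvd n}. hh d * real d) = real n * sqf n / real (totient n)"
proof (rule multf_eq[OF _ _ _ assms])
  show "multf (\<lambda>n. \<Sum>d\<in>{d. d dvd n}. hh d * real d)"
    by (intro multf_divsum multf_mult multf_hh multf_real)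
  show "multf (\<lambda>n. real n * sqf n / real (totient n))"
    by (intro multf_divide multf_mult multf_real multf_sqf multf_totient)
  fix p k :: nat assume pk: "prime p" "0 < k"
  have p2: "real p \<ge> 2" using prime_ge_2_nat[OF pk(1)] by simp
  have "(\<Sum>d\<in>{d. d dvd p^k}. hh d * real d) = (\<Sum>j\<le>k. hh (p^j) * real (p^j))"
    by (rule divsum_pp[OF pk(1)])
  also have "\<dots> = (\<Sum>j\<le>min k 2. hh (p^j) * real (p^j))"
    by (rule sum_trunc) (use pk in \<open>auto simp: hh_pp hc_def\<close>)
  also have "\<dots> = real (p^k) * sqf (p^k) / real (totient (p^k))"
  proof (cases "k = 1")
    case True
    have pp1: "real (p - Suc 0) = real p - 1" using prime_gt_0_nat[OF pk(1)] by (simp add: of_nat_diff)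
    have "(\<Sum>j\<le>min k 2. hh (p^j) * real (p^j)) = 1 + real p * hc p 1" using True
      using pk by (simp add: sum2 hh_prime' hh_Suc0 mult.commute)
    also have "\<dots> = real p / (real p - 1)" using hc_facts(2)[OF pk(1)] p2 by (simp add: field_simps)
    finally show ?thesis using True pk by (simp add: sqf_prime totient_prime pp1)
  next
    case False
    hence "min k 2 = 2" "\<not> k \<le> 1" using pk by auto
    hence "(\<Sum>j\<le>min k 2. hh (p^j) * real (p^j)) = 1 + real p * hc p 1 + real p ^ 2 * hc p 2"
      using pk by (simp add: sum3 hh_pp hh_prime' hh_1' hh_Suc0 mult.commute)
    thus ?thesis using pk hc_facts[OF pk(1)] \<open>\<not> k \<le> 1\<close> by (simp add: sqf_pp)
  qed
  finally show "(\<Sum>d\<in>{d. d dvd p^k}. hh d * real d) = real (p^k) * sqf (p^k) / real (totient (p^k))" .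
qed

lemma C2:
  assumes "n > 0"
  shows "real n / real (totient n) = (\<Sum>d\<in>{d. d dvd n}. sqf d / real (totient d))"
proof (rule multf_eq[OF _ _ _ assms])
  show "multf (\<lambda>n. \<Sum>d\<in>{d. d dvd n}. sqf d / real (totient d))"
    by (intro multf_divsum multf_divide multf_sqf multf_totient)
  show "multf (\<lambda>n. real n / real (totient n))"
    by (intro multf_divide multf_real multf_totient)
  fix p k :: nat assume pk: "prime p" "0 < k"
  have p2: "real p \<ge> 2" using prime_ge_2_nat[OF pk(1)] by simp
  have "(\<Sum>d\<in>{d. d dvd p^k}. sqf d / real (totient d)) = (\<Sum>j\<le>k. sqf (p^j) / real (totient (p^j)))"
    by (rule divsum_pp[OF pk(1)])
  also have "\<dots> = (\<Sum>j\<le>1. sqf (p^j) / real (totient (p^j)))"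
    by (rule sum_trunc) (use pk in \<open>auto simp: sqf_pp\<close>)
  also have "\<dots> = 1 + 1 / (real p - 1)"
  proof -
    have pp1: "real (p - Suc 0) = real p - 1" using prime_gt_0_nat[OF pk(1)] by (simp add: of_nat_diff)
    show ?thesis using pk by (simp add: sqf_pp totient_prime pp1)
  qed
  also have "\<dots> = real p / (real p - 1)" using p2 by (simp add: field_simps)
  also have "\<dots> = real (p^k) / real (totient (p^k))"
  proof -
    obtain k' where k': "k = Suc k'" using pk by (cases k) auto
    have t: "totient (p^k) = p^k' * (p - 1)"
      unfolding k' by (rule totient_prime_power_Suc[OF pk(1)])
    have T: "real (totient (p^k)) = real p ^ k' * (real p - 1)"
      using t prime_gt_0_nat[OF pk(1)] by (simp add: of_nat_diff)
    have E: "real (p^k) = real p * real p ^ k'" by (simp add: k')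
    have "real p ^ k' > 0" using p2 by simp
    thus ?thesis unfolding T E using p2 by (simp add: field_simps)
  qed
  finally show "real (p^k) / real (totient (p^k)) = (\<Sum>d\<in>{d. d dvd p^k}. sqf d / real (totient d))" by simp
qed

definition HH :: "nat \<Rightarrow> real" where "HH n = (\<Sum>d\<in>{d. d dvd n}. hh d)"
definition GG :: "nat \<Rightarrow> real" where "GG n = (\<Sum>d\<in>{d. d dvd n}. hh d * ln (real d))"

lemma multf_HH: "multf HH"
  unfolding HH_def by (rule multf_divsum[OF multf_hh])

lemma HH_p2: "prime p \<Longrightarrow> HH (p^2) = 1"
proof -
  assume p: "prime p"
  have p2: "real p \<ge> 2" using prime_ge_2_nat[OF p] by simp
  have "HH (p^2) = (\<Sum>j\<le>2. hh (p^j))" unfolding HH_def by (rule divsum_pp[OF p])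
  thus ?thesis using p p2 hc_facts[OF p] by (simp add: sum3 hh_pp hh_prime' hh_1' hh_Suc0)
qed

lemma GG_mult:
  assumes "coprime m n" "m > 0" "n > 0"
  shows "GG (m*n) = GG m * HH n + HH m * GG n"
proof -
  have "GG (m*n) = (\<Sum>d1\<in>{d. d dvd m}. \<Sum>d2\<in>{d. d dvd n}. hh (d1*d2) * ln (real (d1*d2)))"
    unfolding GG_def by (rule divisor_prod_sum[OF assms])
  also have "\<dots> = (\<Sum>d1\<in>{d. d dvd m}. \<Sum>d2\<in>{d. d dvd n}. (hh d1 * ln (real d1)) * hh d2 + hh d1 * (hh d2 * ln (real d2)))"
  proof (intro sum.cong refl)
    fix d1 d2 assume d: "d1 \<in> {d. d dvd m}" "d2 \<in> {d. d dvd n}"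
    hence "coprime d1 d2" using assms by (auto intro: coprime_imp_coprime dvd_trans)
    hence "hh (d1*d2) = hh d1 * hh d2" using multf_hh by (simp add: multf_def)
    moreover have "d1 > 0" "d2 > 0" using d assms by (auto intro: Nat.gr0I)
    ultimately show "hh (d1*d2) * ln (real (d1*d2)) = (hh d1 * ln (real d1)) * hh d2 + hh d1 * (hh d2 * ln (real d2))"
      by (simp add: ln_mult algebra_simps)
  qed
  also have "\<dots> = GG m * HH n + HH m * GG n"
    unfolding GG_def HH_def by (simp only: sum.distrib sum_product)
  finally show ?thesis .
qed

lemma GG_p2: "prime p \<Longrightarrow> GG (p^2) = - ln (real p) / (real p * (real p - 1))"
proof -
  assume p: "prime p"
  have p2: "real p \<ge> 2" using prime_ge_2_nat[OF p] by simp
  have "GG (p^2) = (\<Sum>j\<le>2. hh (p^j) * ln (real (p^j)))" unfolding GG_def by (rule divsum_pp[OF p])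
  also have "\<dots> = hc p 1 * ln (real p) + hc p 2 * (2 * ln (real p))"
    using p by (simp add: sum3 hh_pp hh_prime' hh_Suc0 ln_realpow)
  also have "\<dots> = - hc p 1 * ln (real p)" by (simp add: hc_def)
  finally show ?thesis by (simp add: hc_def)
qed

definition Qs :: "nat set \<Rightarrow> nat" where "Qs P = (\<Prod>p\<in>P. p^2)"

lemma Qs_facts:
  assumes "finite P" "\<forall>p\<in>P. prime p"
  shows "Qs P > 0 \<and> HH (Qs P) = 1 \<and> GG (Qs P) = - (\<Sum>p\<in>P. ln (real p) / (real p * (real p - 1)))"
  using assms
proof (induction P rule: finite_induct)
  case empty
  thus ?case by (simp add: Qs_def HH_def GG_def hh_Suc0)
next
  case (insert p P)
  have p: "prime p" using insert by simp
  have IH: "Qs P > 0" "HH (Qs P) = 1" "GG (Qs P) = - (\<Sum>p\<in>P. ln (real p) / (real p * (real p - 1)))"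
    using insert by auto
  have cop: "coprime (p^2) (Qs P)"
    unfolding Qs_def
  proof (rule prod_coprime_right)
    fix q assume "q \<in> P"
    hence "prime q" "q \<noteq> p" using insert by auto
    thus "coprime (p^2) (q^2)" using p by (simp add: primes_coprime)
  qed
  have eq: "Qs (insert p P) = p^2 * Qs P" using insert by (simp add: Qs_def)
  have pos: "p^2 > 0" using p prime_gt_0_nat by simp
  show ?case
    using IH cop pos p insert(1,2)
    by (simp add: eq multfD[OF multf_HH] HH_p2 GG_mult GG_p2)
qed

lemma reindex_div:
  fixes F :: "nat \<Rightarrow> nat \<Rightarrow> real"
  shows "(\<Sum>n\<in>{1..Z}. \<Sum>d\<in>{d. d dvd n}. F d (n div d)) = (\<Sum>d\<in>{1..Z}. \<Sum>k\<in>{1..Z div d}. F d k)"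
proof -
  have fin: "\<forall>n\<in>{1..Z}. finite {d. d dvd n}" by auto
  have L: "(\<Sum>n\<in>{1..Z}. \<Sum>d\<in>{d. d dvd n}. F d (n div d)) = (\<Sum>p\<in>Sigma {1..Z} (\<lambda>n. {d. d dvd n}). F (snd p) (fst p div snd p))"
    using fin by (simp add: sum.Sigma case_prod_beta)
  have R: "(\<Sum>d\<in>{1..Z}. \<Sum>k\<in>{1..Z div d}. F d k) = (\<Sum>p\<in>Sigma {1..Z} (\<lambda>d. {1..Z div d}). F (fst p) (snd p))"
    by (simp add: sum.Sigma case_prod_beta)
  have "(\<Sum>p\<in>Sigma {1..Z} (\<lambda>n. {d. d dvd n}). F (snd p) (fst p div snd p)) = (\<Sum>p\<in>Sigma {1..Z} (\<lambda>d. {1..Z div d}). F (fst p) (snd p))"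
  proof (rule sum.reindex_bij_witness[of _ "\<lambda>p. (fst p * snd p, fst p)" "\<lambda>p. (snd p, fst p div snd p)"])
    fix a assume a: "a \<in> Sigma {1..Z} (\<lambda>n. {d. d dvd n})"
    then obtain n d where nd: "a = (n,d)" "1 \<le> n" "n \<le> Z" "d dvd n" by auto
    have dpos: "d > 0" using nd by (auto intro: Nat.gr0I)
    show "(fst (snd a, fst a div snd a) * snd (snd a, fst a div snd a), fst (snd a, fst a div snd a)) = a"
      using nd by simp
    have "n div d \<ge> 1" using nd dpos by (metis dvd_div_eq_0_iff dvd_imp_le less_one not_le zero_less_one)
    moreover have "n div d \<le> Z div d" using nd by (simp add: div_le_mono)
    moreover have "d \<le> Z" using nd dvd_imp_le[of d n] by auto
    ultimately show "(snd a, fst a div snd a) \<in> Sigma {1..Z} (\<lambda>d. {1..Z div d})"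
      using nd dpos by auto
    show "F (fst (snd a, fst a div snd a)) (snd (snd a, fst a div snd a)) = F (snd a) (fst a div snd a)"
      by simp
  next
    fix b assume b: "b \<in> Sigma {1..Z} (\<lambda>d. {1..Z div d})"
    then obtain d k where dk: "b = (d,k)" "1 \<le> d" "d \<le> Z" "1 \<le> k" "k \<le> Z div d" by auto
    show "(snd (fst b * snd b, fst b), fst (fst b * snd b, fst b) div snd (fst b * snd b, fst b)) = b"
      using dk by simp
    have "k * d \<le> Z" using dk less_eq_div_iff_mult_less_eq[of d k Z] by simp
    hence "d * k \<le> Z" by (simp add: mult.commute)
    moreover have "1 \<le> d * k" using dk by simp
    ultimately show "(fst b * snd b, fst b) \<in> Sigma {1..Z} (\<lambda>n. {d. d dvd n})" using dk by auto
  qed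
  thus ?thesis using L R by simp
qed

lemma mu2_sqf: "n > 0 \<Longrightarrow> (moebius_mu n)^2 = sqf n"
  by (simp add: moebius_mu_def sqf_def power_mult[symmetric])

lemma S1_formula:
  assumes "z \<ge> 1"
  shows "S1 z = (\<Sum>d\<in>{1..nat \<lfloor>z\<rfloor>}. hh d * harm (nat \<lfloor>z\<rfloor> div d))"
proof -
  define Z where "Z = nat \<lfloor>z\<rfloor>"
  have "S1 z = (\<Sum>n\<in>{1..Z}. \<Sum>d\<in>{d. d dvd n}. hh d / real (n div d))"
    unfolding S1_def Z_def
  proof (intro sum.cong refl)
    fix n assume "n \<in> {1..nat \<lfloor>z\<rfloor>}"
    hence n: "n > 0" by auto
    have "(moebius_mu n)^2 / real (totient n) = (1 / real n) * (real n * sqf n / real (totient n))"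
      using n by (simp add: mu2_sqf)
    also have "\<dots> = (1 / real n) * (\<Sum>d\<in>{d. d dvd n}. hh d * real d)"
      by (simp add: C1[OF n])
    also have "\<dots> = (\<Sum>d\<in>{d. d dvd n}. hh d / real (n div d))"
      unfolding sum_distrib_left
    proof (intro sum.cong refl)
      fix d assume "d \<in> {d. d dvd n}"
      then obtain e where e: "n = d * e" by auto
      have "d > 0" "e > 0" using e n by auto
      thus "1 / real n * (hh d * real d) = hh d / real (n div d)" using e by simp
    qed
    finally show "(moebius_mu n)^2 / real (totient n) = (\<Sum>d\<in>{d. d dvd n}. hh d / real (n div d))" .
  qed
  also have "\<dots> = (\<Sum>d\<in>{1..Z}. \<Sum>k\<in>{1..Z div d}. hh d / real k)"
    by (rule reindex_div)
  also have "\<dots> = (\<Sum>d\<in>{1..Z}. hh d * harm (Z div d))"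
    by (simp add: harm_def sum_distrib_left divide_inverse)
  finally show ?thesis by (simp add: Z_def)
qed

lemma harm_approx:
  fixes x :: real
  assumes "x \<ge> 1"
  shows "\<bar>harm (nat \<lfloor>x\<rfloor>) - ln x - euler_mascheroni\<bar> \<le> 1 / x"
proof -
  define n where "n = nat \<lfloor>x\<rfloor>"
  have n1: "n \<ge> 1" using assms by (simp add: n_def le_nat_floor)
  have nx: "real n \<le> x" "x < real n + 1" using assms by (simp_all add: n_def)
  have g: "euler_mascheroni \<in> {harm n - ln (real (Suc n)) + inverse (real (2*(n+1))) .. harm n - ln (real (Suc n)) + inverse (real (2*n))}"
    using euler_mascheroni_bounds[OF n1] by simp
  have g1: "harm n - ln (real n + 1) + inverse (real (2*(n+1))) \<le> euler_mascheroni"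
    using g by (simp add: add.commute)
  have g2: "euler_mascheroni \<le> harm n - ln (real n + 1) + 1 / (2 * real n)"
    using g by (simp add: inverse_eq_divide add.commute)
  have ipos: "inverse (real (2*(n+1))) \<ge> 0" by simp
  have xpos: "x > 0" using assms by simp
  have l1: "ln (real n + 1) - ln x \<le> 1 / x"
  proof -
    have "ln (real n + 1) - ln x = ln ((real n + 1) / x)" using xpos by (simp add: ln_div)
    also have "\<dots> \<le> (real n + 1) / x - 1" using xpos by (intro ln_le_minus_one) simp
    also have "\<dots> = (real n + 1 - x) / x" using xpos by (simp add: field_simps)
    also have "\<dots> \<le> 1 / x" using xpos nx by (intro divide_right_mono) auto
    finally show ?thesis .
  qed
  have l2: "ln (real n + 1) - ln x \<ge> 0" using nx xpos by simp
  have l3: "1 / (2 * real n) \<le> 1 / x"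
    using nx n1 xpos by (intro divide_left_mono) auto
  have "harm n - ln x - euler_mascheroni \<le> 1 / x" using g1 l1 ipos by linarith
  moreover have "harm n - ln x - euler_mascheroni \<ge> - (1 / x)" using g2 l2 l3 by linarith
  ultimately show ?thesis by (simp add: n_def[symmetric] abs_le_iff)
qed

definition al :: "nat \<Rightarrow> real" where "al a = sqf a / (real a * real (totient a))"
definition be :: "nat \<Rightarrow> real" where "be b = 1 / (real b * real (totient b))"

lemma multf_one: "multf (\<lambda>_. 1)" by (simp add: multf_def)

lemma multf_al: "multf al"
  unfolding al_def by (intro multf_divide multf_mult multf_sqf multf_real multf_totient)

lemma multf_be: "multf be"
  unfolding be_def by (intro multf_divide multf_one multf_mult multf_real multf_totient)

lemma al_nonneg: "al a \<ge> 0" by (simp add: al_def sqf_def)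
lemma be_nonneg: "be b \<ge> 0" by (simp add: be_def)

lemma al_prime: "prime p \<Longrightarrow> al p = 1 / (real p * (real p - 1))"
  using prime_gt_0_nat[of p] by (simp add: al_def sqf_prime totient_prime of_nat_diff)

lemma be_prime: "prime p \<Longrightarrow> be p = 1 / (real p * (real p - 1))"
  using prime_gt_0_nat[of p] by (simp add: be_def totient_prime of_nat_diff)

lemma hh_pair:
  assumes "d > 0"
  shows "hh d \<noteq> 0 \<longrightarrow> (\<exists>a b. d = a * b^2 \<and> \<bar>hh d\<bar> = al a * be b)"
proof (rule pp_induct[OF _ _ assms])
  show "hh 1 \<noteq> 0 \<longrightarrow> (\<exists>a b. 1 = a * b^2 \<and> \<bar>hh 1\<bar> = al a * be b)"
    using multf_1[OF multf_al] multf_1[OF multf_be] hh_1' by (intro impI exI[of _ 1]) simp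
next
  fix p k m :: nat
  assume H: "prime p" "0 < k" "\<not> p dvd m" "0 < m" and IH: "hh m \<noteq> 0 \<longrightarrow> (\<exists>a b. m = a * b^2 \<and> \<bar>hh m\<bar> = al a * be b)"
  show "hh (p^k*m) \<noteq> 0 \<longrightarrow> (\<exists>a b. p^k*m = a * b^2 \<and> \<bar>hh (p^k*m)\<bar> = al a * be b)"
  proof
    assume nz: "hh (p^k*m) \<noteq> 0"
    have c: "coprime (p^k) m" using H coprime_pp by blast
    have split: "hh (p^k*m) = hc p k * hh m" using multfD[OF multf_hh c] hh_pp[OF H(1,2)] by simp
    hence nz2: "hc p k \<noteq> 0" "hh m \<noteq> 0" using nz by auto
    then obtain a b where ab: "m = a * b^2" "\<bar>hh m\<bar> = al a * be b" using IH by blast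
    have pa: "\<not> p dvd a" "\<not> p dvd b" using H(3) ab(1) by (auto simp: power2_eq_square)
    have ca: "coprime p a" "coprime p b" using pa H(1) by (simp_all add: prime_imp_coprime)
    have hcabs: "\<bar>hc p k\<bar> = 1 / (real p * (real p - 1))"
      using nz2(1) prime_ge_2_nat[OF H(1)] by (auto simp: hc_def split: if_splits)
    have k12: "k = 1 \<or> k = 2" using nz2(1) by (auto simp: hc_def split: if_splits)
    thus "\<exists>a b. p^k*m = a * b^2 \<and> \<bar>hh (p^k*m)\<bar> = al a * be b"
    proof
      assume k1: "k = 1"
      show ?thesis
      proof (intro exI conjI)
        show "p^k*m = (p*a) * b^2" using ab k1 by simp
        show "\<bar>hh (p^k*m)\<bar> = al (p*a) * be b"
          using split ab hcabs multfD[OF multf_al ca(1)] al_prime[OF H(1)] by (simp add: abs_mult)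
      qed
    next
      assume k2: "k = 2"
      show ?thesis
      proof (intro exI conjI)
        show "p^k*m = a * (p*b)^2" using ab k2 by (simp add: power_mult_distrib)
        show "\<bar>hh (p^k*m)\<bar> = al a * be (p*b)"
          using split ab hcabs multfD[OF multf_be ca(2)] be_prime[OF H(1)] by (simp add: abs_mult)
      qed
    qed
  qed
qed

lemma pair_sum_bound:
  fixes F :: "nat \<Rightarrow> real"
  assumes fin: "finite D" and pos: "\<forall>d\<in>D. d > 0" and le: "\<forall>d\<in>D. d \<le> X" and F: "\<forall>d. F d \<ge> 0"
  shows "(\<Sum>d\<in>D. \<bar>hh d\<bar> * F d) \<le>
    (\<Sum>a\<in>{1..X}. \<Sum>b\<in>{1..X}. if a * b^2 \<in> D then al a * be b * F (a * b^2) else 0)"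
proof -
  define D' where "D' = {d\<in>D. hh d \<noteq> 0}"
  define pr where "pr d = (SOME q. d = fst q * (snd q)^2 \<and> \<bar>hh d\<bar> = al (fst q) * be (snd q))" for d
  have prp: "d = fst (pr d) * (snd (pr d))^2 \<and> \<bar>hh d\<bar> = al (fst (pr d)) * be (snd (pr d))" if "d \<in> D'" for d
  proof -
    from that have "d > 0" "hh d \<noteq> 0" using pos by (auto simp: D'_def)
    then obtain a b where "d = a * b^2 \<and> \<bar>hh d\<bar> = al a * be b" using hh_pair by blast
    hence "\<exists>q. d = fst q * (snd q)^2 \<and> \<bar>hh d\<bar> = al (fst q) * be (snd q)" by (metis fst_conv snd_conv)
    thus ?thesis unfolding pr_def by (rule someI_ex)
  qed
  define G where "G q = (if fst q * (snd q)^2 \<in> D then al (fst q) * be (snd q) * F (fst q * (snd q)^2) else 0)" for q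
  have G0: "G q \<ge> 0" for q using al_nonneg be_nonneg F by (simp add: G_def)
  have "(\<Sum>d\<in>D. \<bar>hh d\<bar> * F d) = (\<Sum>d\<in>D'. \<bar>hh d\<bar> * F d)"
    unfolding D'_def using fin by (intro sum.mono_neutral_right) auto
  also have "\<dots> = (\<Sum>d\<in>D'. G (pr d))"
  proof (intro sum.cong refl)
    fix d assume d: "d \<in> D'"
    hence "d \<in> D" by (simp add: D'_def)
    thus "\<bar>hh d\<bar> * F d = G (pr d)" using prp[OF d] by (simp add: G_def)
  qed
  also have "\<dots> = (\<Sum>q\<in>pr ` D'. G q)"
  proof -
    have "inj_on pr D'"
    proof (rule inj_onI)
      fix x y assume "x \<in> D'" "y \<in> D'" "pr x = pr y"
      thus "x = y" using prp by metis
    qed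
    thus ?thesis by (simp add: sum.reindex)
  qed
  also have "\<dots> \<le> (\<Sum>q\<in>{1..X} \<times> {1..X}. G q)"
  proof (rule sum_mono2)
    show "finite ({1..X} \<times> {1..X})" by simp
    show "pr ` D' \<subseteq> {1..X} \<times> {1..X}"
    proof
      fix q assume "q \<in> pr ` D'"
      then obtain d where d: "d \<in> D'" "q = pr d" by auto
      have dD: "d \<in> D" using d by (simp add: D'_def)
      have e: "d = fst q * (snd q)^2" using prp[OF d(1)] d(2) by simp
      have dp: "d > 0" "d \<le> X" using dD pos le by auto
      have "fst q \<ge> 1" "snd q \<ge> 1" using e dp by (auto intro: Nat.gr0I simp: Suc_le_eq)
      moreover have "fst q \<le> d" using e dp by (metis dvd_imp_le dvd_triv_left)
      moreover have "snd q \<le> d"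
      proof -
        have "snd q \<le> (snd q)^2" using \<open>snd q \<ge> 1\<close> by (simp add: power2_eq_square)
        also have "\<dots> \<le> d" using e dp by (metis dvd_imp_le dvd_triv_right)
        finally show ?thesis .
      qed
      ultimately show "q \<in> {1..X} \<times> {1..X}" using dp by (cases q) auto
    qed
    show "0 \<le> G q" if "q \<in> {1..X} \<times> {1..X} - pr ` D'" for q using G0 by simp
  qed
  also have "\<dots> = (\<Sum>a\<in>{1..X}. \<Sum>b\<in>{1..X}. G (a,b))"
    by (simp add: sum.cartesian_product)
  finally show ?thesis by (simp only: G_def fst_conv snd_conv)
qed

lemma multf_prod_primes:
  assumes "multf g" "finite S" "\<forall>p\<in>S. prime p"
  shows "g (\<Prod>p\<in>S. p) = (\<Prod>p\<in>S. g p)"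
  using assms(2,3)
proof (induction S rule: finite_induct)
  case empty thus ?case using multf_1[OF assms(1)] by simp
next
  case (insert p S)
  have "coprime p (\<Prod>q\<in>S. q)"
  proof (rule prod_coprime_right)
    fix q assume "q \<in> S"
    hence "prime q" "q \<noteq> p" using insert by auto
    thus "coprime p q" using insert by (simp add: primes_coprime)
  qed
  thus ?case using insert multfD[OF assms(1)] by simp
qed

lemma sqfree_prod_pf:
  assumes "squarefree (e::nat)" "e > 0"
  shows "(\<Prod>p\<in>prime_factors e. p) = e"
proof -
  have m: "\<forall>p\<in>prime_factors e. multiplicity p e = 1"
    using squarefree_factorial_semiring'[of e] assms by simp
  have "(\<Prod>p\<in>prime_factors e. p ^ multiplicity p e) = normalize e"
    using assms by (intro prod_prime_factors) simp
  moreover have "(\<Prod>p\<in>prime_factors e. p ^ multiplicity p e) = (\<Prod>p\<in>prime_factors e. p)"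
    using m by (intro prod.cong refl) simp
  ultimately show ?thesis by simp
qed

lemma euler_prod_bound:
  assumes g: "multf g" "\<forall>n. g n \<ge> 0" and B: "finite B" "\<forall>e\<in>B. 0 < e \<and> e \<le> Y"
  shows "(\<Sum>e\<in>B. sqf e * g e) \<le> (\<Prod>p\<in>{p. prime p \<and> p \<le> Y}. 1 + g p)"
proof -
  define P where "P = {p. prime p \<and> p \<le> Y}"
  have finP: "finite P" unfolding P_def by (rule finite_subset[of _ "{..Y}"]) auto
  define Bs where "Bs = {e\<in>B. squarefree e}"
  have "(\<Sum>e\<in>B. sqf e * g e) = (\<Sum>e\<in>Bs. g e)"
  proof -
    have "(\<Sum>e\<in>B. sqf e * g e) = (\<Sum>e\<in>Bs. sqf e * g e)"
      unfolding Bs_def using B by (intro sum.mono_neutral_right) (auto simp: sqf_def)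
    also have "\<dots> = (\<Sum>e\<in>Bs. g e)" by (intro sum.cong refl) (simp add: Bs_def sqf_def)
    finally show ?thesis .
  qed
  also have "\<dots> = (\<Sum>e\<in>Bs. \<Prod>p\<in>prime_factors e. g p)"
  proof (intro sum.cong refl)
    fix e assume "e \<in> Bs"
    hence e: "squarefree e" "e > 0" using B by (auto simp: Bs_def)
    have "g e = g (\<Prod>p\<in>prime_factors e. p)" using sqfree_prod_pf[OF e] by simp
    also have "\<dots> = (\<Prod>p\<in>prime_factors e. g p)"
      by (rule multf_prod_primes[OF g(1)]) auto
    finally show "g e = (\<Prod>p\<in>prime_factors e. g p)" .
  qed
  also have "\<dots> = (\<Sum>S\<in>prime_factors ` Bs. \<Prod>p\<in>S. g p)"
  proof -
    have "inj_on prime_factors Bs"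
    proof (rule inj_onI)
      fix x y assume xy: "x \<in> Bs" "y \<in> Bs" "prime_factors x = prime_factors y"
      have "x = (\<Prod>p\<in>prime_factors x. p)" using xy B by (intro sqfree_prod_pf[symmetric]) (auto simp: Bs_def)
      also have "\<dots> = (\<Prod>p\<in>prime_factors y. p)" using xy by simp
      also have "\<dots> = y" using xy B by (intro sqfree_prod_pf) (auto simp: Bs_def)
      finally show "x = y" .
    qed
    thus ?thesis by (simp add: sum.reindex)
  qed
  also have "\<dots> \<le> (\<Sum>S\<in>Pow P. \<Prod>p\<in>S. g p)"
  proof (rule sum_mono2)
    show "finite (Pow P)" using finP by simp
    show "prime_factors ` Bs \<subseteq> Pow P"
    proof
      fix S assume "S \<in> prime_factors ` Bs"
      then obtain e where e: "e \<in> Bs" "S = prime_factors e" by auto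
      have "e > 0" "e \<le> Y" using e B by (auto simp: Bs_def)
      moreover have "p \<in> P" if "p \<in> prime_factors e" for p
      proof -
        have "prime p" "p dvd e" using that by (auto simp: in_prime_factors_iff)
        hence "p \<le> e" using \<open>e > 0\<close> by (simp add: dvd_imp_le)
        thus ?thesis using \<open>prime p\<close> \<open>e \<le> Y\<close> by (simp add: P_def)
      qed
      ultimately show "S \<in> Pow P" using e by auto
    qed
    show "0 \<le> (\<Prod>p\<in>S. g p)" if "S \<in> Pow P - prime_factors ` Bs" for S
      using g(2) by (simp add: prod_nonneg)
  qed
  also have "\<dots> = (\<Prod>p\<in>P. g p + 1)"
    using prod_add[OF finP, of g "\<lambda>_. 1"] by simp
  finally show ?thesis by (simp add: P_def add.commute)
qed

definition T29 :: "nat set" where "T29 = {2,3,5,7,11,13,17,19,23,29}"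

lemma primes_le29:
  assumes "prime p" "p \<le> 29"
  shows "p \<in> T29"
proof -
  have d: "q dvd p \<Longrightarrow> q = 1 \<or> q = p" for q using assms(1) by (simp add: prime_nat_iff)
  have "p \<ge> 2" using prime_ge_2_nat[OF assms(1)] .
  moreover have "2 dvd p \<longrightarrow> p = 2" "3 dvd p \<longrightarrow> p = 3" "5 dvd p \<longrightarrow> p = 5" using d by force+
  ultimately have "p = 2 \<or> p = 3 \<or> p = 5 \<or> p = 7 \<or> p = 11 \<or> p = 13 \<or> p = 17 \<or> p = 19 \<or> p = 23 \<or> p = 29"
    using assms(2) by presburger
  thus ?thesis by (auto simp: T29_def)
qed

lemma prod_primes_bound:
  assumes g: "\<forall>n. g n \<ge> (0::real)" and g': "\<forall>n. g' n \<ge> 0" and gg: "\<forall>p. prime p \<longrightarrow> g p \<le> g' p"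
  shows "(\<Prod>p\<in>{p. prime p \<and> p \<le> Y}. 1 + g p) \<le> (\<Prod>p\<in>T29. 1 + g' p) * exp (\<Sum>n\<in>{29<..Y}. g' n)"
proof -
  define A where "A = {p. prime p \<and> p \<le> Y \<and> p \<le> 29}"
  define Bb where "Bb = {p. prime p \<and> p \<le> Y \<and> 29 < p}"
  have finA: "finite A" unfolding A_def by (rule finite_subset[of _ "{..Y}"]) auto
  have finB: "finite Bb" unfolding Bb_def by (rule finite_subset[of _ "{..Y}"]) auto
  have eq: "{p. prime p \<and> p \<le> Y} = A \<union> Bb" "A \<inter> Bb = {}" by (auto simp: A_def Bb_def)
  have AT: "A \<subseteq> T29" using primes_le29 by (auto simp: A_def)
  have finT: "finite T29" by (simp add: T29_def)
  have PA: "(\<Prod>p\<in>A. 1 + g p) \<le> (\<Prod>p\<in>T29. 1 + g' p)"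
  proof -
    have "(\<Prod>p\<in>A. 1 + g p) \<le> (\<Prod>p\<in>A. 1 + g' p)"
      using g gg by (intro prod_mono) (auto simp: A_def add_increasing)
    also have "\<dots> \<le> (\<Prod>p\<in>A. 1 + g' p) * (\<Prod>p\<in>T29 - A. 1 + g' p)"
    proof -
      have "(\<Prod>p\<in>T29 - A. 1 + g' p) \<ge> 1" using g' by (intro prod_ge_1) simp
      moreover have "(\<Prod>p\<in>A. 1 + g' p) \<ge> 0" using g' by (intro prod_nonneg) (simp add: add_nonneg_nonneg)
      ultimately show ?thesis by (metis mult_left_mono mult.right_neutral)
    qed
    also have "\<dots> = (\<Prod>p\<in>T29. 1 + g' p)"
      using prod.subset_diff[OF AT finT, of "\<lambda>p. 1 + g' p"] by (simp add: mult.commute)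
    finally show ?thesis .
  qed
  have PB: "(\<Prod>p\<in>Bb. 1 + g p) \<le> exp (\<Sum>n\<in>{29<..Y}. g' n)"
  proof -
    have "(\<Prod>p\<in>Bb. 1 + g p) \<le> (\<Prod>p\<in>Bb. exp (g' p))"
      using g gg by (intro prod_mono) (auto simp: Bb_def add_increasing intro: order.trans[OF _ exp_ge_add_one_self])
    also have "\<dots> = exp (\<Sum>p\<in>Bb. g' p)" using finB by (simp add: exp_sum)
    also have "\<dots> \<le> exp (\<Sum>n\<in>{29<..Y}. g' n)"
      using g' by (intro exp_mono sum_mono2) (auto simp: Bb_def)
    finally show ?thesis .
  qed
  have "(\<Prod>p\<in>{p. prime p \<and> p \<le> Y}. 1 + g p) = (\<Prod>p\<in>A. 1 + g p) * (\<Prod>p\<in>Bb. 1 + g p)"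
    unfolding eq(1) using finA finB eq(2) by (rule prod.union_disjoint)
  also have "\<dots> \<le> (\<Prod>p\<in>T29. 1 + g' p) * exp (\<Sum>n\<in>{29<..Y}. g' n)"
    using PA PB g g' by (intro mult_mono) (auto intro: prod_nonneg add_nonneg_nonneg)
  finally show ?thesis .
qed

lemma telesc:
  fixes f u :: "nat \<Rightarrow> real"
  assumes "\<And>n. m < n \<Longrightarrow> f n \<le> c * (u (n-1) - u n)" "m \<le> Y"
  shows "(\<Sum>n\<in>{m<..Y}. f n) \<le> c * (u m - u Y)"
  using assms(2)
proof (induction Y rule: dec_induct)
  case base thus ?case by simp
next
  case (step Y)
  have "{m<..Suc Y} = insert (Suc Y) {m<..Y}" using step by auto
  hence "(\<Sum>n\<in>{m<..Suc Y}. f n) = f (Suc Y) + (\<Sum>n\<in>{m<..Y}. f n)" by simp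
  also have "\<dots> \<le> c * (u Y - u (Suc Y)) + c * (u m - u Y)"
    using assms(1)[of "Suc Y"] step by (intro add_mono) auto
  also have "\<dots> = c * (u m - u (Suc Y))" by (simp add: algebra_simps)
  finally show ?case .
qed

lemma tele_step:
  fixes s t K w :: real
  assumes "t > 0" "s > 0" "s^2 - t^2 = 1" "s + t \<le> K * w" "w > 0"
  shows "1 / (w * s * t) \<le> K * (1/t - 1/s)"
proof -
  have st: "s - t = 1 / (s + t)" using assms by (simp add: field_simps power2_eq_square)
  have "K * (1/t - 1/s) = K * (s - t) / (s * t)" using assms by (simp add: field_simps)
  also have "\<dots> = K * (1 / (s + t)) / (s * t)" by (simp only: st)
  also have "\<dots> = K / ((s + t) * s * t)" using assms by (simp add: field_simps)
  also have "\<dots> \<ge> K / ((K * w) * s * t)"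
  proof -
    have "K * w > 0" using assms by linarith
    hence "K > 0" using assms by (simp add: zero_less_mult_iff)
    thus ?thesis using assms by (intro divide_left_mono mult_right_mono mult_pos_pos) auto
  qed
  finally have "K / ((K * w) * s * t) \<le> K * (1/t - 1/s)" .
  moreover have "K / ((K * w) * s * t) = 1 / (w * s * t)"
  proof -
    have "K * w > 0" using assms by linarith
    hence "K > 0" using assms by (simp add: zero_less_mult_iff)
    thus ?thesis by simp
  qed
  ultimately show ?thesis by simp
qed

lemma exp_le_inv: "0 \<le> x \<Longrightarrow> x < 1 \<Longrightarrow> exp x \<le> 1 / (1 - (x::real))"
proof -
  assume x: "0 \<le> x" "x < 1"
  have "1 - x \<le> exp (-x)" using exp_ge_add_one_self[of "-x"] by simp
  hence "1 / exp (-x) \<le> 1 / (1 - x)" using x by (intro divide_left_mono) auto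
  thus ?thesis by (simp add: exp_minus field_simps)
qed

definition gM :: "nat \<Rightarrow> real" where "gM n = 1 / (real n * (real n - 1))"

lemma gM_nonneg: "gM n \<ge> 0"
  by (cases n) (auto simp: gM_def)

lemma tail_M: "(\<Sum>n\<in>{29<..Y}. gM n) \<le> 1/29"
proof (cases "29 \<le> Y")
  case True
  have "(\<Sum>n\<in>{29<..Y}. gM n) \<le> 1 * (1 / real 29 - 1 / real Y)"
  proof (rule telesc[OF _ True])
    fix n :: nat assume n: "29 < n"
    have "real (n - 1) = real n - 1" using n by (simp add: of_nat_diff)
    thus "gM n \<le> 1 * (1 / real (n - 1) - 1 / real n)" using n by (simp add: gM_def field_simps)
  qed
  also have "\<dots> \<le> 1/29" using True by simp
  finally show ?thesis .
next
  case False thus ?thesis by simp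
qed

lemma prod_M: "(\<Prod>p\<in>T29. 1 + gM p) \<le> 19294/10000"
  by (simp add: T29_def gM_def)

lemma M_bound:
  assumes "finite B" "\<forall>e\<in>B. e > 0"
  shows "(\<Sum>e\<in>B. sqf e * be e) \<le> 2"
proof -
  define Y where "Y = Max (insert 0 B)"
  have Y: "\<forall>e\<in>B. 0 < e \<and> e \<le> Y" using assms by (auto simp: Y_def)
  have "(\<Sum>e\<in>B. sqf e * be e) \<le> (\<Prod>p\<in>{p. prime p \<and> p \<le> Y}. 1 + be p)"
    by (rule euler_prod_bound[OF multf_be _ assms(1) Y]) (simp add: be_nonneg)
  also have "\<dots> \<le> (\<Prod>p\<in>T29. 1 + gM p) * exp (\<Sum>n\<in>{29<..Y}. gM n)"
  proof (rule prod_primes_bound)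
    show "\<forall>n. 0 \<le> be n" by (simp add: be_nonneg)
    show "\<forall>n. 0 \<le> gM n" by (simp add: gM_nonneg)
    show "\<forall>p. prime p \<longrightarrow> be p \<le> gM p" by (simp add: be_prime gM_def)
  qed
  also have "\<dots> \<le> (19294/10000) * (29/28)"
  proof (rule mult_mono)
    show "(\<Prod>p\<in>T29. 1 + gM p) \<le> 19294/10000" by (rule prod_M)
    have "exp (\<Sum>n\<in>{29<..Y}. gM n) \<le> exp (1/29)" using tail_M by simp
    also have "\<dots> \<le> 1 / (1 - 1/29)" by (rule exp_le_inv) auto
    finally show "exp (\<Sum>n\<in>{29<..Y}. gM n) \<le> 29/28" by simp
  qed (auto intro: prod_nonneg simp: gM_nonneg add_nonneg_nonneg)
  also have "\<dots> \<le> 2" by simp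
  finally show ?thesis .
qed

definition gS :: "nat \<Rightarrow> real" where "gS n = 1 / (sqrt (real n) * (real n - 1))"
definition gs :: "nat \<Rightarrow> real" where "gs n = 1 / (sqrt (real n) * real (totient n))"

lemma gS_nonneg: "gS n \<ge> 0"
  by (cases n) (auto simp: gS_def)

lemma multf_gs: "multf gs"
  unfolding gs_def by (intro multf_divide multf_one multf_mult multf_sqrt multf_totient)

lemma gs_nonneg: "gs n \<ge> 0" by (simp add: gs_def)

lemma gs_prime: "prime p \<Longrightarrow> gs p = gS p"
  using prime_gt_0_nat[of p] by (simp add: gs_def gS_def totient_prime of_nat_diff)

lemma tail_S: "(\<Sum>n\<in>{29<..Y}. gS n) \<le> 39/100"
proof (cases "29 \<le> Y")
  case True
  have "(\<Sum>n\<in>{29<..Y}. gS n) \<le> (21/10) * (1 / sqrt (real 29) - 1 / sqrt (real Y))"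
  proof (rule telesc[OF _ True])
    fix n :: nat assume n: "29 < n"
    have rn: "real (n - 1) = real n - 1" using n by (simp add: of_nat_diff)
    define s where "s = sqrt (real n)"
    define t where "t = sqrt (real (n - 1))"
    have tpos: "t > 0" "s > 0" using n by (auto simp: s_def t_def)
    have s2: "s^2 = real n" "t^2 = real n - 1" using rn by (simp_all add: s_def t_def)
    have "s \<le> 11/10 * t"
      unfolding s_def
    proof (rule real_le_lsqrt)
      show "0 \<le> 11/10 * t" using tpos by simp
      have "(11/10 * t)^2 = (11/10)^2 * t^2" by (rule power_mult_distrib)
      hence "(11/10 * t)^2 = 121/100 * (real n - 1)" using s2 by (simp add: power2_eq_square algebra_simps)
      moreover have "real n \<le> 121/100 * (real n - 1)" using n by simp
      ultimately show "real n \<le> (11/10 * t)^2" by simp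
    qed
    hence st: "s + t \<le> 21/10 * t" by simp
    have "1 / (t * s * t) \<le> 21/10 * (1/t - 1/s)"
      by (rule tele_step[OF tpos(1) tpos(2) _ st tpos(1)]) (simp add: s2)
    moreover have "t * s * t = sqrt (real n) * (real n - 1)"
      using s2 by (simp add: s_def power2_eq_square)
    hence "gS n = 1 / (t * s * t)" by (simp add: gS_def)
    ultimately have "gS n \<le> 21/10 * (1/t - 1/s)" by simp
    thus "gS n \<le> 21/10 * (1 / sqrt (real (n - 1)) - 1 / sqrt (real n))"
      by (simp only: s_def t_def)
  qed
  also have "\<dots> \<le> (21/10) * (1 / sqrt 29)" by simp
  also have "\<dots> \<le> (21/10) * (1 / (5385/1000))"
  proof -
    have "5385/1000 \<le> sqrt (29::real)" by (rule real_le_rsqrt) (simp add: power2_eq_square)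
    thus ?thesis by (intro mult_left_mono divide_left_mono) auto
  qed
  also have "\<dots> \<le> 39/100" by simp
  finally show ?thesis .
next
  case False thus ?thesis by simp
qed

definition Lw :: "nat \<Rightarrow> real" where
  "Lw p = (if p = 2 then 1414/1000 else if p = 3 then 1732/1000 else if p = 5 then 2236/1000
    else if p = 7 then 2645/1000 else if p = 11 then 3316/1000 else if p = 13 then 3605/1000
    else if p = 17 then 4123/1000 else if p = 19 then 4358/1000 else if p = 23 then 4795/1000
    else 5385/1000)"

lemma Lw_sq: "p \<in> T29 \<Longrightarrow> (Lw p)^2 \<le> real p \<and> 0 < Lw p"
  by (auto simp: T29_def Lw_def power2_eq_square)

lemma Lw_ok: "p \<in> T29 \<Longrightarrow> Lw p \<le> sqrt (real p) \<and> 0 < Lw p"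
  using Lw_sq[of p] real_le_rsqrt by blast

lemma prod_S: "(\<Prod>p\<in>T29. 1 + gS p) \<le> 28631/10000"
proof -
  have "(\<Prod>p\<in>T29. 1 + gS p) \<le> (\<Prod>p\<in>T29. 1 + 1 / (Lw p * (real p - 1)))"
  proof (rule prod_mono)
    fix p assume p: "p \<in> T29"
    have p2: "real p \<ge> 2" using p by (auto simp: T29_def)
    have "gS p \<le> 1 / (Lw p * (real p - 1))"
      unfolding gS_def using Lw_ok[OF p] p2
      by (intro divide_left_mono mult_right_mono mult_pos_pos) auto
    thus "0 \<le> 1 + gS p \<and> 1 + gS p \<le> 1 + 1 / (Lw p * (real p - 1))"
      using gS_nonneg[of p] by simp
  qed
  also have "\<dots> \<le> 28631/10000" by (simp add: T29_def Lw_def)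
  finally show ?thesis .
qed

lemma S_bound:
  assumes "finite B" "\<forall>e\<in>B. e > 0"
  shows "(\<Sum>e\<in>B. sqf e * gs e) \<le> 5"
proof -
  define Y where "Y = Max (insert 0 B)"
  have Y: "\<forall>e\<in>B. 0 < e \<and> e \<le> Y" using assms by (auto simp: Y_def)
  have "(\<Sum>e\<in>B. sqf e * gs e) \<le> (\<Prod>p\<in>{p. prime p \<and> p \<le> Y}. 1 + gs p)"
    by (rule euler_prod_bound[OF multf_gs _ assms(1) Y]) (simp add: gs_nonneg)
  also have "\<dots> \<le> (\<Prod>p\<in>T29. 1 + gS p) * exp (\<Sum>n\<in>{29<..Y}. gS n)"
  proof (rule prod_primes_bound)
    show "\<forall>n. 0 \<le> gs n" by (simp add: gs_nonneg)
    show "\<forall>n. 0 \<le> gS n" by (simp add: gS_nonneg)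
    show "\<forall>p. prime p \<longrightarrow> gs p \<le> gS p" by (simp add: gs_prime)
  qed
  also have "\<dots> \<le> (28631/10000) * (100/61)"
  proof (rule mult_mono)
    show "(\<Prod>p\<in>T29. 1 + gS p) \<le> 28631/10000" by (rule prod_S)
    have "exp (\<Sum>n\<in>{29<..Y}. gS n) \<le> exp (39/100)" using tail_S by simp
    also have "\<dots> \<le> 1 / (1 - 39/100)" by (rule exp_le_inv) auto
    finally show "exp (\<Sum>n\<in>{29<..Y}. gS n) \<le> 100/61" by simp
  qed (auto intro: prod_nonneg simp: gS_nonneg add_nonneg_nonneg)
  also have "\<dots> \<le> 5" by simp
  finally show ?thesis .
qed

lemma step32:
  fixes n :: nat assumes n: "n \<ge> 2"
  shows "1 / (real n * sqrt (real n)) \<le> 2 * (1 / sqrt (real (n - 1)) - 1 / sqrt (real n))"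
proof -
  have rn: "real (n - 1) = real n - 1" using n by (simp add: of_nat_diff)
  define s where "s = sqrt (real n)"
  define t where "t = sqrt (real (n - 1))"
  have tpos: "t > 0" "s > 0" using n by (auto simp: s_def t_def)
  have s2: "s^2 = real n" "t^2 = real n - 1" using rn by (simp_all add: s_def t_def)
  have ts: "t \<le> s" unfolding s_def t_def by simp
  hence st: "s + t \<le> 2 * s" by simp
  have A: "1 / (s * s * t) \<le> 2 * (1/t - 1/s)"
    by (rule tele_step[OF tpos(1) tpos(2) _ st tpos(2)]) (simp add: s2)
  have "1 / (real n * sqrt (real n)) = 1 / (s * s * s)"
    using s2 by (simp add: s_def power2_eq_square)
  also have "\<dots> \<le> 1 / (s * s * t)"
    using tpos ts by (intro divide_left_mono mult_left_mono mult_pos_pos) auto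
  finally have "1 / (real n * sqrt (real n)) \<le> 2 * (1/t - 1/s)" using A by simp
  thus ?thesis by (simp only: s_def t_def)
qed

lemma tail32:
  fixes x :: real
  assumes K: "finite K" "\<forall>k\<in>K. real k > x" and x: "x > 0"
  shows "(\<Sum>k\<in>K. 1 / (real k * sqrt (real k))) \<le> 3 / sqrt x"
proof -
  define Km where "Km = Max (insert 0 K)"
  define n0 where "n0 = nat \<lfloor>x\<rfloor>"
  have n0x: "real n0 \<le> x" "x < real n0 + 1" using x by (simp_all add: n0_def)
  have sub: "K \<subseteq> {n0<..Km}"
  proof
    fix k assume k: "k \<in> K"
    have "real k > real n0" using K k n0x by force
    moreover have "k \<le> Km" using K k by (simp add: Km_def)
    ultimately show "k \<in> {n0<..Km}" by simp
  qed
  have f0: "\<And>k. 0 \<le> 1 / (real k * sqrt (real k))" by simp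
  have "(\<Sum>k\<in>K. 1 / (real k * sqrt (real k))) \<le> (\<Sum>k\<in>{n0<..Km}. 1 / (real k * sqrt (real k)))"
    by (rule sum_mono2[OF _ sub]) (simp_all add: f0)
  also have "\<dots> \<le> 3 / sqrt x"
  proof (cases "n0 \<le> Km")
    case False
    hence "{n0<..Km} = {}" by auto
    thus ?thesis using x by simp
  next
    case True
    show ?thesis
    proof (cases "n0 = 0")
      case False
      hence n01: "n0 \<ge> 1" by simp
      have "(\<Sum>k\<in>{n0<..Km}. 1 / (real k * sqrt (real k))) \<le> 2 * (1 / sqrt (real n0) - 1 / sqrt (real Km))"
        by (rule telesc[OF _ True]) (use n01 step32 in auto)
      also have "\<dots> \<le> 2 / sqrt (real n0)" by simp
      also have "\<dots> \<le> 3 / sqrt x"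
      proof -
        have "2 * sqrt x \<le> 3 * sqrt (real n0)"
        proof -
          have "sqrt (4 * x) \<le> sqrt (9 * real n0)" using n0x n01 by (intro real_sqrt_le_mono) linarith
          thus ?thesis by (simp add: real_sqrt_mult)
        qed
        thus ?thesis using n01 x by (simp add: field_simps)
      qed
      finally show ?thesis .
    next
      case True0: True
      have x1: "x < 1" using n0x True0 by simp
      show ?thesis
      proof (cases "Km = 0")
        case True
        thus ?thesis using True0 x by simp
      next
        case False
        have split: "{n0<..Km} = insert 1 {1<..Km}" using True0 False by auto
        have "(\<Sum>k\<in>{1<..Km}. 1 / (real k * sqrt (real k))) \<le> 2 * (1 / sqrt (real 1) - 1 / sqrt (real Km))"
          by (rule telesc) (use step32 False in auto)
        also have "\<dots> \<le> 2" by simp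
        finally have "(\<Sum>k\<in>{n0<..Km}. 1 / (real k * sqrt (real k))) \<le> 3" unfolding split by simp
        also have "3 \<le> 3 / sqrt x"
        proof -
          have "sqrt x \<le> 1" using x1 by simp
          thus ?thesis using x by (simp add: field_simps)
        qed
        finally show ?thesis .
      qed
    qed
  qed
  finally show ?thesis .
qed

lemma L1:
  fixes y :: real
  assumes B: "finite B" "\<forall>b\<in>B. 1 \<le> b \<and> real b \<le> y" and y: "y \<ge> 0"
  shows "(\<Sum>b\<in>B. real b / real (totient b)) \<le> 2 * y"
proof -
  define Y where "Y = nat \<lfloor>y\<rfloor>"
  have sub: "B \<subseteq> {1..Y}"
  proof
    fix b assume "b \<in> B"
    hence "1 \<le> b" "real b \<le> y" using B by auto
    thus "b \<in> {1..Y}" by (simp add: Y_def le_nat_floor)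
  qed
  have "(\<Sum>b\<in>B. real b / real (totient b)) \<le> (\<Sum>b\<in>{1..Y}. real b / real (totient b))"
    by (rule sum_mono2[OF _ sub]) auto
  also have "\<dots> = (\<Sum>n\<in>{1..Y}. \<Sum>e\<in>{e. e dvd n}. sqf e / real (totient e))"
    by (intro sum.cong refl) (simp add: C2)
  also have "\<dots> = (\<Sum>e\<in>{1..Y}. \<Sum>k\<in>{1..Y div e}. sqf e / real (totient e))"
    using reindex_div[of "\<lambda>e k. sqf e / real (totient e)" Y] by simp
  also have "\<dots> = (\<Sum>e\<in>{1..Y}. real (Y div e) * (sqf e / real (totient e)))"
    by simp
  also have "\<dots> \<le> (\<Sum>e\<in>{1..Y}. (real Y / real e) * (sqf e / real (totient e)))"
    by (intro sum_mono mult_right_mono of_nat_div_le_of_nat) (auto simp: sqf_def)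
  also have "\<dots> = real Y * (\<Sum>e\<in>{1..Y}. sqf e * be e)"
    by (simp add: sum_distrib_left be_def)
  also have "\<dots> \<le> real Y * 2"
    by (intro mult_left_mono M_bound) auto
  also have "\<dots> \<le> 2 * y" using y by (simp add: Y_def)
  finally show ?thesis .
qed

lemma L4:
  fixes y :: real
  assumes B: "finite B" "\<forall>b\<in>B. real b > y" and y: "y > 0"
  shows "(\<Sum>b\<in>B. 1 / (sqrt (real b) * real (totient b))) \<le> 6 / sqrt y"
proof -
  define Z where "Z = Max (insert 0 B)"
  have sub: "B \<subseteq> {1..Z}"
  proof
    fix b assume b: "b \<in> B"
    have "real b > 0" using B b y by force
    moreover have "b \<le> Z" using B b by (simp add: Z_def)
    ultimately show "b \<in> {1..Z}" by simp
  qed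
  define F where "F e k = (if e * k \<in> B then sqf e / real (totient e) * (1 / (real (e*k) * sqrt (real (e*k)))) else 0)" for e k
  have "(\<Sum>b\<in>B. 1 / (sqrt (real b) * real (totient b))) =
        (\<Sum>n\<in>{1..Z}. if n \<in> B then 1 / (sqrt (real n) * real (totient n)) else 0)"
  proof -
    have "(\<Sum>n\<in>{1..Z}. if n \<in> B then 1 / (sqrt (real n) * real (totient n)) else 0) =
          (\<Sum>n\<in>{1..Z} \<inter> B. 1 / (sqrt (real n) * real (totient n)))"
      by (rule sum.inter_restrict[symmetric]) simp
    moreover have "{1..Z} \<inter> B = B" using sub by auto
    ultimately show ?thesis by simp
  qed
  also have "\<dots> = (\<Sum>n\<in>{1..Z}. \<Sum>e\<in>{e. e dvd n}. F e (n div e))"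
  proof (intro sum.cong refl)
    fix n assume n: "n \<in> {1..Z}"
    hence npos: "n > 0" by simp
    have eq: "e * (n div e) = n" if "e \<in> {e. e dvd n}" for e using that by simp
    have "(\<Sum>e\<in>{e. e dvd n}. F e (n div e)) =
          (\<Sum>e\<in>{e. e dvd n}. if n \<in> B then sqf e / real (totient e) * (1 / (real n * sqrt (real n))) else 0)"
    proof (intro sum.cong refl)
      fix e assume "e \<in> {e. e dvd n}"
      hence "e * (n div e) = n" by simp
      thus "F e (n div e) = (if n \<in> B then sqf e / real (totient e) * (1 / (real n * sqrt (real n))) else 0)"
        by (simp add: F_def)
    qed
    also have "\<dots> = (if n \<in> B then (\<Sum>e\<in>{e. e dvd n}. sqf e / real (totient e)) * (1 / (real n * sqrt (real n))) else 0)"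
      by (simp add: sum_divide_distrib)
    also have "\<dots> = (if n \<in> B then real n / real (totient n) * (1 / (real n * sqrt (real n))) else 0)"
      using C2[OF npos] by simp
    also have "\<dots> = (if n \<in> B then 1 / (sqrt (real n) * real (totient n)) else 0)"
      using npos by simp
    finally show "(if n \<in> B then 1 / (sqrt (real n) * real (totient n)) else 0) = (\<Sum>e\<in>{e. e dvd n}. F e (n div e))"
      by simp
  qed
  also have "\<dots> = (\<Sum>e\<in>{1..Z}. \<Sum>k\<in>{1..Z div e}. F e k)"
    by (rule reindex_div)
  also have "\<dots> \<le> (\<Sum>e\<in>{1..Z}. (3 / sqrt y) * (sqf e * be e))"
  proof (rule sum_mono)
    fix e assume e: "e \<in> {1..Z}"
    hence epos: "e > 0" by simp
    define Ke where "Ke = {k \<in> {1..Z div e}. e * k \<in> B}"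
    have "(\<Sum>k\<in>{1..Z div e}. F e k) = (\<Sum>k\<in>{1..Z div e}. if e * k \<in> B then sqf e / (real (totient e) * real e * sqrt (real e)) * (1 / (real k * sqrt (real k))) else 0)"
      by (intro sum.cong refl) (simp add: F_def real_sqrt_mult field_simps)
    also have "\<dots> = sqf e / (real (totient e) * real e * sqrt (real e)) * (\<Sum>k\<in>Ke. 1 / (real k * sqrt (real k)))"
      by (simp add: Ke_def sum.inter_filter[symmetric] sum_distrib_left if_distrib cong: if_cong)
    also have "\<dots> \<le> sqf e / (real (totient e) * real e * sqrt (real e)) * (3 / sqrt (y / real e))"
    proof (rule mult_left_mono)
      show "(\<Sum>k\<in>Ke. 1 / (real k * sqrt (real k))) \<le> 3 / sqrt (y / real e)"
      proof (rule tail32)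
        show "finite Ke" by (simp add: Ke_def)
        show "y / real e > 0" using y epos by simp
        show "\<forall>k\<in>Ke. y / real e < real k"
        proof
          fix k assume "k \<in> Ke"
          hence "e * k \<in> B" by (simp add: Ke_def)
          hence "real (e*k) > y" using B by blast
          thus "y / real e < real k" using epos by (simp add: field_simps)
        qed
      qed
      show "0 \<le> sqf e / (real (totient e) * real e * sqrt (real e))" by (simp add: sqf_def)
    qed
    also have "\<dots> = (3 / sqrt y) * (sqf e * be e)"
      using epos y by (simp add: be_def real_sqrt_divide field_simps)
    finally show "(\<Sum>k\<in>{1..Z div e}. F e k) \<le> (3 / sqrt y) * (sqf e * be e)" .
  qed
  also have "\<dots> = (3 / sqrt y) * (\<Sum>e\<in>{1..Z}. sqf e * be e)"
    by (simp add: sum_distrib_left)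
  also have "\<dots> \<le> (3 / sqrt y) * 2"
    using y by (intro mult_left_mono M_bound) auto
  finally show ?thesis by simp
qed

lemma weight_bound:
  fixes t :: real assumes t: "t \<ge> 1"
  shows "\<bar>euler_mascheroni - ln t\<bar> \<le> 3/2 * sqrt (sqrt t)"
proof -
  define u where "u = sqrt (sqrt t)"
  have u1: "u \<ge> 1" using t by (simp add: u_def)
  have tu: "t = u ^ 4"
  proof -
    have "u ^ 4 = (u^2)^2" by (simp flip: power_mult)
    also have "u^2 = sqrt t" using t by (simp add: u_def)
    also have "(sqrt t)^2 = t" using t by simp
    finally show ?thesis by simp
  qed
  have lnt: "ln t = 4 * ln u" using u1 by (simp add: tu ln_realpow)
  have ln83: "ln (8/3::real) \<le> 114/100"
  proof -
    have "(8/3::real) \<le> 1 + 114/100 + (114/100)^2/2" by (simp add: power2_eq_square)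
    also have "\<dots> \<le> exp (114/100)" by (rule exp_lower_Taylor_quadratic) simp
    finally have "ln (8/3::real) \<le> ln (exp (114/100))" by (subst ln_le_cancel_iff) auto
    thus ?thesis by simp
  qed
  have L: "ln u \<le> u / a + ln a - 1" if a: "a > 0" for a
  proof -
    have "ln (u / a) \<le> u / a - 1" using u1 a by (intro ln_le_minus_one) simp
    moreover have "ln (u / a) = ln u - ln a" using u1 a by (intro ln_divide_pos) auto
    ultimately show ?thesis by linarith
  qed
  have "ln u \<le> u / (8/3) + ln (8/3) - 1" by (rule L) simp
  moreover have "u / (8/3) = 3/8 * u" by simp
  ultimately have "ln u \<le> 3/8 * u + ln (8/3) - 1" by (metis)
  hence lt: "ln t \<le> 3/2 * u + 56/100" using lnt ln83 by simp
  have g: "euler_mascheroni > (19/33::real)" "euler_mascheroni < (13/22::real)"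
    using euler_mascheroni_gt_19_over_33 euler_mascheroni_less_13_over_22 by auto
  have "ln t \<ge> 0" using t by simp
  hence a1: "euler_mascheroni - ln t \<le> 3/2 * u" using g u1 by linarith
  have a2: "ln t - euler_mascheroni \<le> 3/2 * u" using lt g by linarith
  show ?thesis unfolding u_def[symmetric] using a1 a2 by (intro abs_leI) linarith+
qed

lemma sqrt_div_self: "x > 0 \<Longrightarrow> sqrt x / x = 1 / sqrt (x::real)"
  by (metis real_div_sqrt div_by_1 divide_divide_eq_right less_eq_real_def mult.commute times_divide_eq_left)

lemma T2:
  fixes z :: real assumes z: "z \<ge> 1"
  shows "(\<Sum>d\<in>{1..nat \<lfloor>z\<rfloor>}. \<bar>hh d\<bar> * (real d / z)) \<le> 10 / sqrt z"
proof -
  define Z where "Z = nat \<lfloor>z\<rfloor>"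
  have Zz: "real Z \<le> z" using z by (simp add: Z_def)
  have "(\<Sum>d\<in>{1..Z}. \<bar>hh d\<bar> * (real d / z)) \<le>
    (\<Sum>a\<in>{1..Z}. \<Sum>b\<in>{1..Z}. if a * b^2 \<in> {1..Z} then al a * be b * (real (a * b^2) / z) else 0)"
    by (rule pair_sum_bound) (use z in auto)
  also have "\<dots> \<le> (\<Sum>a\<in>{1..Z}. (2 / sqrt z) * (sqf a * gs a))"
  proof (rule sum_mono)
    fix a assume a: "a \<in> {1..Z}"
    hence apos: "real a > 0" by simp
    define Ba where "Ba = {b \<in> {1..Z}. a * b^2 \<in> {1..Z}}"
    define ca where "ca = sqf a / (real (totient a) * z)"
    have "(\<Sum>b\<in>{1..Z}. if a * b^2 \<in> {1..Z} then al a * be b * (real (a * b^2) / z) else 0)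
        = (\<Sum>b\<in>{1..Z}. if a * b^2 \<in> {1..Z} then ca * (real b / real (totient b)) else 0)"
    proof (intro sum.cong refl)
      fix b assume b: "b \<in> {1..Z}"
      have "al a * be b * (real (a * b^2) / z) = ca * (real b / real (totient b))"
        using apos b z by (simp add: al_def be_def ca_def power2_eq_square field_simps)
      thus "(if a * b^2 \<in> {1..Z} then al a * be b * (real (a * b^2) / z) else 0) =
            (if a * b^2 \<in> {1..Z} then ca * (real b / real (totient b)) else 0)" by simp
    qed
    also have "\<dots> = ca * (\<Sum>b\<in>{1..Z}. if a * b^2 \<in> {1..Z} then real b / real (totient b) else 0)"
      by (simp add: sum_distrib_left if_distrib cong: if_cong)
    also have "\<dots> = ca * (\<Sum>b\<in>Ba. real b / real (totient b))"
    proof -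
      have "(\<Sum>b\<in>{1..Z}. if a * b^2 \<in> {1..Z} then real b / real (totient b) else 0) = (\<Sum>b\<in>Ba. real b / real (totient b))"
        unfolding Ba_def by (rule sum.inter_filter[symmetric]) simp
      thus ?thesis by simp
    qed
    also have "\<dots> \<le> ca * (2 * sqrt (z / real a))"
    proof (rule mult_left_mono)
      show "0 \<le> ca" using z by (simp add: ca_def sqf_def)
      show "(\<Sum>b\<in>Ba. real b / real (totient b)) \<le> 2 * sqrt (z / real a)"
      proof (rule L1)
        show "finite Ba" by (simp add: Ba_def)
        show "0 \<le> sqrt (z / real a)" using z apos by simp
        show "\<forall>b\<in>Ba. 1 \<le> b \<and> real b \<le> sqrt (z / real a)"
        proof
          fix b assume "b \<in> Ba"
          hence b: "1 \<le> b" "a * b^2 \<le> Z" by (auto simp: Ba_def)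
          have "real a * (real b)^2 \<le> z" using b(2) Zz by (metis of_nat_le_iff of_nat_mult of_nat_power order.trans)
          hence "(real b)^2 \<le> z / real a" using apos by (simp add: field_simps)
          thus "1 \<le> b \<and> real b \<le> sqrt (z / real a)" using b(1) by (simp add: real_le_rsqrt)
        qed
      qed
    qed
    also have "\<dots> = (2 / sqrt z) * (sqf a * gs a)"
    proof -
      have "sqrt z > 0" using z by simp
      hence "z = sqrt z * sqrt z" by simp
      hence "ca * (2 * sqrt (z / real a)) = 2 * sqf a * sqrt z / (real (totient a) * (sqrt z * sqrt z) * sqrt (real a))"
        using apos z by (simp add: ca_def real_sqrt_divide field_simps)
      also have "\<dots> = (2 / sqrt z) * (sqf a * gs a)"
        using apos z by (simp add: gs_def field_simps)
      finally show ?thesis .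
    qed
    finally show "(\<Sum>b\<in>{1..Z}. if a * b^2 \<in> {1..Z} then al a * be b * (real (a * b^2) / z) else 0)
        \<le> (2 / sqrt z) * (sqf a * gs a)" .
  qed
  also have "\<dots> = (2 / sqrt z) * (\<Sum>a\<in>{1..Z}. sqf a * gs a)"
    by (simp add: sum_distrib_left)
  also have "\<dots> \<le> (2 / sqrt z) * 5"
    using z by (intro mult_left_mono S_bound) auto
  finally show ?thesis by (simp add: Z_def)
qed

lemma T1:
  fixes z :: real assumes z: "z \<ge> 1" and D: "finite D" "\<forall>d\<in>D. real d > z"
  shows "(\<Sum>d\<in>D. \<bar>hh d\<bar> * \<bar>ln z + euler_mascheroni - ln (real d)\<bar>) \<le> 45 / sqrt z"
proof -
  define X where "X = Max (insert 0 D)"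
  define r4 where "r4 x = sqrt (sqrt x)" for x :: real
  define F where "F d = 3/2 * r4 (real d / z)" for d :: nat
  have dpos: "\<forall>d\<in>D. d > 0" using D z by force
  have "(\<Sum>d\<in>D. \<bar>hh d\<bar> * \<bar>ln z + euler_mascheroni - ln (real d)\<bar>) \<le> (\<Sum>d\<in>D. \<bar>hh d\<bar> * F d)"
  proof (rule sum_mono)
    fix d assume d: "d \<in> D"
    have dz: "real d / z \<ge> 1" using D d z by (simp add: less_imp_le)
    have "ln (real d / z) = ln (real d) - ln z" using d dpos z by (intro ln_divide_pos) auto
    hence "\<bar>ln z + euler_mascheroni - ln (real d)\<bar> = \<bar>euler_mascheroni - ln (real d / z)\<bar>" by simp
    also have "\<dots> \<le> F d" unfolding F_def r4_def by (rule weight_bound[OF dz])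
    finally show "\<bar>hh d\<bar> * \<bar>ln z + euler_mascheroni - ln (real d)\<bar> \<le> \<bar>hh d\<bar> * F d"
      by (intro mult_left_mono) auto
  qed
  also have "\<dots> \<le> (\<Sum>a\<in>{1..X}. \<Sum>b\<in>{1..X}. if a * b^2 \<in> D then al a * be b * F (a * b^2) else 0)"
    by (rule pair_sum_bound) (use D dpos z in \<open>auto simp: X_def F_def r4_def\<close>)
  also have "\<dots> \<le> (\<Sum>a\<in>{1..X}. (9 / sqrt z) * (sqf a * gs a))"
  proof (rule sum_mono)
    fix a assume a: "a \<in> {1..X}"
    hence apos: "real a > 0" by simp
    define Ba where "Ba = {b \<in> {1..X}. a * b^2 \<in> D}"
    define ca where "ca = 3/2 * sqf a * r4 (real a) / (real a * real (totient a) * r4 z)"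
    have "(\<Sum>b\<in>{1..X}. if a * b^2 \<in> D then al a * be b * F (a * b^2) else 0)
        = (\<Sum>b\<in>{1..X}. if a * b^2 \<in> D then ca * (1 / (sqrt (real b) * real (totient b))) else 0)"
    proof (intro sum.cong refl)
      fix b assume b: "b \<in> {1..X}"
      hence bpos: "real b > 0" by simp
      have r: "r4 (real (a * b^2) / z) = r4 (real a) * sqrt (real b) / r4 z"
        using apos bpos z by (simp add: r4_def real_sqrt_mult real_sqrt_divide)
      have sb: "real b = sqrt (real b) * sqrt (real b)" using bpos by simp
      have e1: "sqrt (real b) / real b = 1 / sqrt (real b)" using bpos by (rule sqrt_div_self)
      have "al a * be b * F (a * b^2) = ca * (sqrt (real b) / real b) / real (totient b)"
        unfolding F_def r al_def be_def ca_def
        using apos bpos z by (simp add: field_simps)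
      also have "\<dots> = ca * (1 / (sqrt (real b) * real (totient b)))" unfolding e1 by simp
      finally have "al a * be b * F (a * b^2) = ca * (1 / (sqrt (real b) * real (totient b)))" .
      thus "(if a * b^2 \<in> D then al a * be b * F (a * b^2) else 0) =
            (if a * b^2 \<in> D then ca * (1 / (sqrt (real b) * real (totient b))) else 0)" by simp
    qed
    also have "\<dots> = ca * (\<Sum>b\<in>{1..X}. if a * b^2 \<in> D then 1 / (sqrt (real b) * real (totient b)) else 0)"
      by (simp add: sum_distrib_left if_distrib cong: if_cong)
    also have "\<dots> = ca * (\<Sum>b\<in>Ba. 1 / (sqrt (real b) * real (totient b)))"
    proof -
      have "(\<Sum>b\<in>{1..X}. if a * b^2 \<in> D then 1 / (sqrt (real b) * real (totient b)) else 0) = (\<Sum>b\<in>Ba. 1 / (sqrt (real b) * real (totient b)))"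
        unfolding Ba_def by (rule sum.inter_filter[symmetric]) simp
      thus ?thesis by simp
    qed
    also have "\<dots> \<le> ca * (6 / sqrt (sqrt (z / real a)))"
    proof (rule mult_left_mono)
      show "0 \<le> ca" using z by (simp add: ca_def sqf_def r4_def)
      show "(\<Sum>b\<in>Ba. 1 / (sqrt (real b) * real (totient b))) \<le> 6 / sqrt (sqrt (z / real a))"
      proof (rule L4)
        show "finite Ba" by (simp add: Ba_def)
        show "0 < sqrt (z / real a)" using z apos by simp
        show "\<forall>b\<in>Ba. sqrt (z / real a) < real b"
        proof
          fix b assume "b \<in> Ba"
          hence "a * b^2 \<in> D" by (simp add: Ba_def)
          hence "real (a * b^2) > z" using D by blast
          hence "z / real a < (real b)^2" using apos by (simp add: field_simps)
          hence "sqrt (z / real a) < sqrt ((real b)^2)" by (rule real_sqrt_less_mono)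
          thus "sqrt (z / real a) < real b" by simp
        qed
      qed
    qed
    also have "\<dots> = (9 / sqrt z) * (sqf a * gs a)"
    proof -
      have r4a: "r4 (real a) * r4 (real a) = sqrt (real a)" using apos by (simp add: r4_def)
      have r4z: "r4 z * r4 z = sqrt z" using z by (simp add: r4_def)
      have q: "sqrt (sqrt (z / real a)) = r4 z / r4 (real a)"
        using apos z by (simp add: r4_def real_sqrt_divide)
      have pos: "r4 z > 0" "r4 (real a) > 0" using apos z by (auto simp: r4_def)
      have "ca * (6 / sqrt (sqrt (z / real a))) = 9 * sqf a * (r4 (real a) * r4 (real a)) / (real a * real (totient a) * (r4 z * r4 z))"
        unfolding q ca_def using pos apos by (simp add: field_simps)
      also have "\<dots> = 9 * sqf a * sqrt (real a) / (real a * real (totient a) * sqrt z)"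
        by (simp only: r4a r4z)
      also have "\<dots> = (9 / sqrt z) * (sqf a * gs a)"
      proof -
        have "sqrt (real a) / real a = 1 / sqrt (real a)" using apos by (rule sqrt_div_self)
        thus ?thesis using apos z by (simp add: gs_def field_simps)
      qed
      finally show ?thesis .
    qed
    finally show "(\<Sum>b\<in>{1..X}. if a * b^2 \<in> D then al a * be b * F (a * b^2) else 0)
        \<le> (9 / sqrt z) * (sqf a * gs a)" .
  qed
  also have "\<dots> = (9 / sqrt z) * (\<Sum>a\<in>{1..X}. sqf a * gs a)"
    by (simp add: sum_distrib_left)
  also have "\<dots> \<le> (9 / sqrt z) * 5"
    using z by (intro mult_left_mono S_bound) auto
  finally show ?thesis by simp
qed

lemma dvd_Q:
  assumes d: "d > 0" "d \<le> N" and h: "hh d \<noteq> 0"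
  shows "d dvd Qs {p. prime p \<and> p \<le> N}"
proof -
  define P where "P = {p. prime p \<and> p \<le> N}"
  have finP: "finite P" unfolding P_def by (rule finite_subset[of _ "{..N}"]) auto
  have Qf: "Qs P > 0" using Qs_facts[OF finP] by (auto simp: P_def)
  show ?thesis unfolding P_def[symmetric]
  proof (rule multiplicity_le_imp_dvd)
    show "d \<noteq> 0" using d by simp
    fix p :: nat assume p: "prime p"
    show "multiplicity p d \<le> multiplicity p (Qs P)"
    proof (cases "p dvd d")
      case False
      hence "multiplicity p d = 0" by (simp add: not_dvd_imp_multiplicity_0)
      thus ?thesis by simp
    next
      case True
      hence pf: "p \<in> prime_factors d" using p d by (simp add: in_prime_factors_iff)
      have "p \<le> d" using True d by (simp add: dvd_imp_le)
      hence pP: "p \<in> P" using p d by (simp add: P_def)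
      have "hc p (multiplicity p d) \<noteq> 0"
        using h pf by (auto simp: hh_def prod_zero_iff)
      hence m2: "multiplicity p d \<le> 2" by (auto simp: hc_def split: if_splits)
      have "p^2 dvd Qs P" unfolding Qs_def using finP pP by (rule dvd_prodI)
      hence "2 \<le> multiplicity p (Qs P)" using Qf p by (intro multiplicity_geI) auto
      thus ?thesis using m2 by simp
    qed
  qed
qed

lemma harm_div:
  fixes z :: real assumes z: "z \<ge> 1" and d: "d \<in> {1..nat \<lfloor>z\<rfloor>}"
  shows "\<bar>harm (nat \<lfloor>z\<rfloor> div d) - ln (z / real d) - euler_mascheroni\<bar> \<le> real d / z"
proof -
  have dpos: "real d > 0" using d by simp
  have dz: "real d \<le> z"
  proof -
    have "real d \<le> real (nat \<lfloor>z\<rfloor>)" using d by simp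
    also have "\<dots> \<le> z" using z by simp
    finally show ?thesis .
  qed
  have eq: "nat \<lfloor>z\<rfloor> div d = nat \<lfloor>z / real d\<rfloor>"
  proof -
    have "\<lfloor>z / real d\<rfloor> = \<lfloor>z / real_of_int (int d)\<rfloor>" by simp
    also have "\<dots> = \<lfloor>z\<rfloor> div int d" by (rule floor_divide_real_eq_div) simp
    finally have "nat \<lfloor>z / real d\<rfloor> = nat (\<lfloor>z\<rfloor> div int d)" by simp
    also have "\<dots> = nat \<lfloor>z\<rfloor> div nat (int d)" using z by (intro nat_div_distrib) simp
    finally show ?thesis by simp
  qed
  have x1: "z / real d \<ge> 1" using dpos dz by simp
  have "\<bar>harm (nat \<lfloor>z / real d\<rfloor>) - ln (z / real d) - euler_mascheroni\<bar> \<le> 1 / (z / real d)"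
    by (rule harm_approx[OF x1])
  thus ?thesis using eq by simp
qed

lemma main_N:
  fixes z :: real assumes z: "z \<ge> 1" and N: "nat \<lfloor>z\<rfloor> \<le> N"
  shows "\<bar>S1 z - ln z - euler_mascheroni - (\<Sum>p\<in>{p. prime p \<and> p \<le> N}. ln (real p) / (real p * (real p - 1)))\<bar> \<le> 55 / sqrt z"
proof -
  define Z where "Z = nat \<lfloor>z\<rfloor>"
  define P where "P = {p. prime p \<and> p \<le> N}"
  define CN where "CN = (\<Sum>p\<in>P. ln (real p) / (real p * (real p - 1)))"
  have finP: "finite P" unfolding P_def by (rule finite_subset[of _ "{..N}"]) auto
  have QF: "Qs P > 0" "HH (Qs P) = 1" "GG (Qs P) = - CN"
    using Qs_facts[OF finP] by (auto simp: P_def CN_def)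
  define D where "D = {d. d dvd Qs P}"
  define Dz where "Dz = {d\<in>D. d \<le> Z}"
  define Dg where "Dg = {d\<in>D. Z < d}"
  have finD: "finite D" using QF by (simp add: D_def)
  have finDz: "finite Dz" "finite Dg" using finD by (auto simp: Dz_def Dg_def)
  have Dun: "D = Dz \<union> Dg" "Dz \<inter> Dg = {}" by (auto simp: Dz_def Dg_def)
  have Dpos: "\<forall>d\<in>D. d > 0" using QF by (auto simp: D_def intro: Nat.gr0I)
  define L where "L = ln z + euler_mascheroni"
  define E where "E d = harm (Z div d) - ln (z / real d) - euler_mascheroni" for d
  have Ebound: "\<bar>E d\<bar> \<le> real d / z" if "d \<in> {1..Z}" for d
    using harm_div[OF z] that by (simp add: E_def Z_def)
  have DzZ: "Dz \<subseteq> {1..Z}" using Dpos by (auto simp: Dz_def Suc_le_eq)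
  have "S1 z = (\<Sum>d\<in>{1..Z}. hh d * harm (Z div d))"
    unfolding Z_def by (rule S1_formula[OF z])
  also have "\<dots> = (\<Sum>d\<in>Dz. hh d * harm (Z div d))"
  proof (rule sum.mono_neutral_right)
    show "finite {1..Z}" by simp
    show "Dz \<subseteq> {1..Z}" by (rule DzZ)
    show "\<forall>i\<in>{1..Z} - Dz. hh i * harm (Z div i) = 0"
    proof
      fix i assume i: "i \<in> {1..Z} - Dz"
      show "hh i * harm (Z div i) = 0"
      proof (rule ccontr)
        assume "hh i * harm (Z div i) \<noteq> 0"
        hence "hh i \<noteq> 0" by auto
        moreover have "i > 0" "i \<le> N" using i N by (auto simp: Z_def)
        ultimately have "i dvd Qs P" unfolding P_def using dvd_Q by blast
        thus False using i by (auto simp: Dz_def D_def)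
      qed
    qed
  qed
  also have "\<dots> = (\<Sum>d\<in>Dz. L * hh d - hh d * ln (real d) + hh d * E d)"
  proof (intro sum.cong refl)
    fix d assume d: "d \<in> Dz"
    have "real d > 0" using d Dpos by (auto simp: Dz_def)
    hence "ln (z / real d) = ln z - ln (real d)" using z by (intro ln_divide_pos) auto
    hence hE: "harm (Z div d) = (L - ln (real d)) + E d" by (simp add: E_def L_def)
    show "hh d * harm (Z div d) = L * hh d - hh d * ln (real d) + hh d * E d"
      unfolding hE by (simp add: algebra_simps)
  qed
  also have "\<dots> = L * (\<Sum>d\<in>Dz. hh d) - (\<Sum>d\<in>Dz. hh d * ln (real d)) + (\<Sum>d\<in>Dz. hh d * E d)"
    by (simp add: sum.distrib sum_subtractf sum_distrib_left)
  finally have S: "S1 z = L * (\<Sum>d\<in>Dz. hh d) - (\<Sum>d\<in>Dz. hh d * ln (real d)) + (\<Sum>d\<in>Dz. hh d * E d)" .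
  have H1: "(\<Sum>d\<in>Dz. hh d) + (\<Sum>d\<in>Dg. hh d) = 1"
    using QF(2) unfolding HH_def D_def[symmetric] Dun(1) by (simp add: sum.union_disjoint finDz Dun(2))
  have G1: "(\<Sum>d\<in>Dz. hh d * ln (real d)) + (\<Sum>d\<in>Dg. hh d * ln (real d)) = - CN"
    using QF(3) unfolding GG_def D_def[symmetric] Dun(1) by (simp add: sum.union_disjoint finDz Dun(2))
  have W: "(\<Sum>d\<in>Dg. hh d * (L - ln (real d))) = L * (\<Sum>d\<in>Dg. hh d) - (\<Sum>d\<in>Dg. hh d * ln (real d))"
    by (simp add: sum_subtractf sum_distrib_left algebra_simps)
  have LL: "L * (\<Sum>d\<in>Dz. hh d) + L * (\<Sum>d\<in>Dg. hh d) = L"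
    using H1 by (simp flip: distrib_left)
  have key: "S1 z - ln z - euler_mascheroni - CN = (\<Sum>d\<in>Dz. hh d * E d) - (\<Sum>d\<in>Dg. hh d * (L - ln (real d)))"
    using S G1 W LL unfolding L_def by linarith
  have b1: "\<bar>\<Sum>d\<in>Dz. hh d * E d\<bar> \<le> 10 / sqrt z"
  proof -
    have "\<bar>\<Sum>d\<in>Dz. hh d * E d\<bar> \<le> (\<Sum>d\<in>Dz. \<bar>hh d\<bar> * (real d / z))"
    proof -
      have "\<bar>\<Sum>d\<in>Dz. hh d * E d\<bar> \<le> (\<Sum>d\<in>Dz. \<bar>hh d * E d\<bar>)" by (rule sum_abs)
      also have "\<dots> \<le> (\<Sum>d\<in>Dz. \<bar>hh d\<bar> * (real d / z))"
      proof (rule sum_mono)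
        fix d assume "d \<in> Dz"
        hence "\<bar>E d\<bar> \<le> real d / z" using DzZ Ebound by auto
        hence "\<bar>hh d\<bar> * \<bar>E d\<bar> \<le> \<bar>hh d\<bar> * (real d / z)" by (intro mult_left_mono) auto
        thus "\<bar>hh d * E d\<bar> \<le> \<bar>hh d\<bar> * (real d / z)" by (simp only: abs_mult)
      qed
      finally show ?thesis .
    qed
    also have "\<dots> \<le> (\<Sum>d\<in>{1..Z}. \<bar>hh d\<bar> * (real d / z))"
      using DzZ z by (intro sum_mono2) auto
    also have "\<dots> \<le> 10 / sqrt z" unfolding Z_def by (rule T2[OF z])
    finally show ?thesis .
  qed
  have b2: "\<bar>\<Sum>d\<in>Dg. hh d * (L - ln (real d))\<bar> \<le> 45 / sqrt z"
  proof -
    have "\<bar>\<Sum>d\<in>Dg. hh d * (L - ln (real d))\<bar> \<le> (\<Sum>d\<in>Dg. \<bar>hh d\<bar> * \<bar>ln z + euler_mascheroni - ln (real d)\<bar>)"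
      using sum_abs[of "\<lambda>d. hh d * (L - ln (real d))" Dg] by (simp add: abs_mult L_def)
    also have "\<dots> \<le> 45 / sqrt z"
    proof (rule T1[OF z finDz(2)])
      show "\<forall>d\<in>Dg. z < real d"
      proof
        fix d assume "d \<in> Dg"
        hence "Z < d" by (simp add: Dg_def)
        hence "real Z + 1 \<le> real d" by simp
        moreover have "z < real Z + 1" using z by (simp add: Z_def)
        ultimately show "z < real d" by simp
      qed
    qed
    finally show ?thesis .
  qed
  have "\<bar>S1 z - ln z - euler_mascheroni - CN\<bar> = \<bar>(\<Sum>d\<in>Dz. hh d * E d) - (\<Sum>d\<in>Dg. hh d * (L - ln (real d)))\<bar>"
    using key by simp
  also have "\<dots> \<le> \<bar>\<Sum>d\<in>Dz. hh d * E d\<bar> + \<bar>\<Sum>d\<in>Dg. hh d * (L - ln (real d))\<bar>"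
    by (rule abs_triangle_ineq4)
  also have "\<dots> \<le> 10 / sqrt z + 45 / sqrt z" using b1 b2 by (rule add_mono)
  also have "\<dots> = 55 / sqrt z" by (simp add: add_divide_distrib[symmetric])
  finally show ?thesis by (simp add: CN_def P_def)
qed

definition fp :: "nat \<Rightarrow> real" where
  "fp p = (if prime p then ln (real p) / (real p * (real p - 1)) else 0)"

lemma summable_gS: "summable gS"
proof (rule summableI_nonneg_bounded)
  show "0 \<le> gS n" for n by (rule gS_nonneg)
  fix N
  have "(\<Sum>i<N. gS i) \<le> (\<Sum>i\<in>{..29} \<union> {29<..N}. gS i)"
    by (rule sum_mono2) (auto simp: gS_nonneg)
  also have "\<dots> = (\<Sum>i\<in>{..29}. gS i) + (\<Sum>i\<in>{29<..N}. gS i)"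
    by (rule sum.union_disjoint) auto
  also have "\<dots> \<le> (\<Sum>i\<in>{..29}. gS i) + 39/100"
    using tail_S by simp
  finally show "(\<Sum>i<N. gS i) \<le> (\<Sum>i\<in>{..29::nat}. gS i) + 39/100" .
qed

lemma fp_le: "\<bar>fp n\<bar> \<le> 2 * gS n"
proof (cases "prime n")
  case False thus ?thesis using gS_nonneg[of n] by (simp add: fp_def)
next
  case True
  have n2: "real n \<ge> 2" using prime_ge_2_nat[OF True] by simp
  have sn: "sqrt (real n) > 0" using n2 by simp
  have "ln (real n) = 2 * ln (sqrt (real n))" using n2 by (simp add: ln_sqrt)
  also have "\<dots> \<le> 2 * (sqrt (real n) - 1)" using sn by (intro mult_left_mono ln_le_minus_one) auto
  also have "\<dots> \<le> 2 * sqrt (real n)" by simp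
  finally have l: "ln (real n) \<le> 2 * sqrt (real n)" .
  have l0: "ln (real n) \<ge> 0" using n2 by simp
  have "fp n = ln (real n) / (real n * (real n - 1))" using True by (simp add: fp_def)
  also have "\<dots> \<le> 2 * sqrt (real n) / (real n * (real n - 1))"
    using l n2 by (intro divide_right_mono) auto
  also have "\<dots> = 2 * (sqrt (real n) / real n) / (real n - 1)"
    using n2 by (simp add: field_simps)
  also have "\<dots> = 2 * (1 / sqrt (real n)) / (real n - 1)"
  proof -
    have "sqrt (real n) / real n = 1 / sqrt (real n)" using n2 by (intro sqrt_div_self) auto
    thus ?thesis by simp
  qed
  also have "\<dots> = 2 * gS n" by (simp add: gS_def)
  finally show ?thesis using l0 n2 True by (simp add: fp_def)
qed

lemma summable_fp: "summable fp"
proof (rule summable_comparison_test')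
  show "summable (\<lambda>n. 2 * gS n)" using summable_gS by (rule summable_mult)
  show "norm (fp n) \<le> 2 * gS n" for n using fp_le[of n] by simp
qed

lemma partial_fp: "(\<Sum>n<Suc N. fp n) = (\<Sum>p\<in>{p. prime p \<and> p \<le> N}. ln (real p) / (real p * (real p - 1)))"
proof -
  have "(\<Sum>p\<in>{p. prime p \<and> p \<le> N}. ln (real p) / (real p * (real p - 1))) =
        (\<Sum>p\<in>{p\<in>{..<Suc N}. prime p}. ln (real p) / (real p * (real p - 1)))"
    by (intro sum.cong refl) auto
  also have "\<dots> = (\<Sum>n<Suc N. fp n)"
    unfolding fp_def by (rule sum.inter_filter) simp
  finally show ?thesis by simp
qed

theorem lemma4p5:
  fixes z :: real
  assumes "z \<ge> 10^9"
  shows "\<bar>S1 z - ln z - euler_mascheroni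
            - (\<Sum>p. if prime p then ln (real p) / (real p * (real p - 1)) else 0)\<bar> \<le> 58 / sqrt z"
proof -
  have z: "z \<ge> 1" using assms by simp
  define S0 where "S0 = S1 z - ln z - euler_mascheroni"
  have sfp: "(\<lambda>p. if prime p then ln (real p) / (real p * (real p - 1)) else 0) = fp"
    by (simp add: fp_def fun_eq_iff)
  have lim: "(\<lambda>N. \<Sum>n<Suc N. fp n) \<longlonglongrightarrow> suminf fp"
    using summable_LIMSEQ[OF summable_fp] by (rule LIMSEQ_Suc)
  hence lim2: "(\<lambda>N. \<bar>S0 - (\<Sum>n<Suc N. fp n)\<bar>) \<longlonglongrightarrow> \<bar>S0 - suminf fp\<bar>"
    by (intro tendsto_intros)
  have ev: "\<exists>M. \<forall>N\<ge>M. \<bar>S0 - (\<Sum>n<Suc N. fp n)\<bar> \<le> 55 / sqrt z"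
  proof (intro exI allI impI)
    fix N assume N: "nat \<lfloor>z\<rfloor> \<le> N"
    show "\<bar>S0 - (\<Sum>n<Suc N. fp n)\<bar> \<le> 55 / sqrt z"
      unfolding partial_fp S0_def by (rule main_N[OF z N])
  qed
  have "\<bar>S0 - suminf fp\<bar> \<le> 55 / sqrt z" by (rule LIMSEQ_le_const2[OF lim2 ev])
  also have "\<dots> \<le> 58 / sqrt z" using z by (intro divide_right_mono) auto
  finally show ?thesis by (simp add: S0_def sfp)
qed


end
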